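(* Let $u_0 \in L^\infty(\mathbb{R})\cap BV(\mathbb{R})$, $c > \|u_0\|_{L^\infty}$, $v_0 = u_0^2/2$, $a_0 = v_0 - c u_0$, $b_0 = v_0 + c u_0$, and let $(a^\varepsilon, b^\varepsilon)$ be the solution of the diagonal system $$\partial_t a - c\,\partial_x a = \frac{1}{\varepsilon} G(a,b), \qquad \partial_t b + c\,\partial_x b = \frac{1}{\varepsilon} G(a,b),$$ with initial data $(a_0,b_0)$, taking values in $[m,M]$. Then for every $k \in [m,M]$ the following entropy inequality holds in the sense of distributions on $(0,\infty)\times\mathbb{R}$: $$\partial_t\big(|a^\varepsilon - k| + |b^\varepsilon - h(k)|\big) - c\,\partial_x\big(|a^\varepsilon - k| - |b^\varepsilon - h(k)|\big) \leq 0 .$$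
   Context: Notation: $G(a,b) = \frac12\Big(\frac{b-a}{2c}\Big)^2 - \frac{a+b}{2}$; $U = \|u_0\|_{L^\infty}$, $m = U\big(\frac U2 - c\big)$, $M = U\big(\frac U2 + c\big)$; $h(a) = a + 2c^2 - 2c\sqrt{c^2 + 2a}$, so that $G(k,h(k)) = 0$ for all $k\in[m,M]$. The system is equivalent, via $a = v - cu$, $b = v + cu$, to $\partial_t u + \partial_x v = 0$, $\partial_t v + c^2\partial_x u = \frac1\varepsilon(\frac12 u^2 - v)$; the solution satisfies $|u^\varepsilon| \le U$ and $a^\varepsilon, b^\varepsilon \in [m,M]$ for all times. *)

theory Defs
  imports "HOL-Analysis.Analysis" "HOL-Probability.Essential_Supremum"
begin

definition G :: "real \<Rightarrow> real \<Rightarrow> real \<Rightarrow> real" where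
  "G c a b = (1/2) * ((b - a) / (2*c))^2 - (a + b) / 2"

definition h :: "real \<Rightarrow> real \<Rightarrow> real" where
  "h c a = a + 2*c^2 - 2*c * sqrt (c^2 + 2*a)"

definition bounded_variation :: "(real \<Rightarrow> real) \<Rightarrow> bool" where
  "bounded_variation f \<longleftrightarrow>
     (\<exists>V. \<forall>xs. sorted xs \<longrightarrow>
        (\<Sum>i<length xs - 1. \<bar>f (xs ! Suc i) - f (xs ! i)\<bar>) \<le> V)"

text \<open>BV(R) as a class of a.e.-equal functions: some representative has finite
  pointwise total variation.\<close>
definition BV :: "(real \<Rightarrow> real) \<Rightarrow> bool" where
  "BV f \<longleftrightarrow> (\<exists>g. bounded_variation g \<and> (AE x in lborel. f x = g x))"

text \<open>C^k functions on R^2 = real \<times> real (coordinates (t,x)), via partial derivatives.\<close>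
fun Ck :: "nat \<Rightarrow> (real \<times> real \<Rightarrow> real) \<Rightarrow> bool" where
  "Ck 0 f = continuous_on UNIV f"
| "Ck (Suc n) f = (\<exists>f1 f2. (\<forall>z. (f has_derivative (\<lambda>(s,y). s * f1 z + y * f2 z)) (at z))
                         \<and> Ck n f1 \<and> Ck n f2)"

definition smooth2 :: "(real \<times> real \<Rightarrow> real) \<Rightarrow> bool" where
  "smooth2 f \<longleftrightarrow> (\<forall>n. Ck n f)"

definition compact_support_in :: "(real \<times> real \<Rightarrow> real) \<Rightarrow> (real \<times> real) set \<Rightarrow> bool" where
  "compact_support_in f S \<longleftrightarrow> (\<exists>K. compact K \<and> K \<subseteq> S \<and> (\<forall>z. z \<notin> K \<longrightarrow> f z = 0))"

definition partials :: "(real \<times> real \<Rightarrow> real) \<Rightarrow> (real \<times> real \<Rightarrow> real) \<Rightarrow> (real \<times> real \<Rightarrow> real) \<Rightarrow> bool" where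
  "partials \<phi> \<phi>t \<phi>x \<longleftrightarrow> (\<forall>z. (\<phi> has_derivative (\<lambda>(s,y). s * \<phi>t z + y * \<phi>x z)) (at z))"

text \<open>Weak (distributional) solution on [0,\<infinity>) \<times> R of
  d_t w + lam d_x w = S(a,b) with w(0,.) = w0, tested against all
  C^\<infinity> functions with compact support in R^2 (i.e. C_c^\<infinity>([0,\<infinity>)\<times>R)).\<close>
definition weak_eq :: "real \<Rightarrow> (real \<times> real \<Rightarrow> real) \<Rightarrow> (real \<times> real \<Rightarrow> real) \<Rightarrow> (real \<Rightarrow> real) \<Rightarrow> bool" where
  "weak_eq lam w S w0 \<longleftrightarrow>
    (\<forall>\<phi> \<phi>t \<phi>x. smooth2 \<phi> \<and> compact_support_in \<phi> UNIV \<and> partials \<phi> \<phi>t \<phi>x \<longrightarrow>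
       (LINT z:{0..} \<times> UNIV|lborel. w z * \<phi>t z + lam * w z * \<phi>x z + S z * \<phi> z)
       + (LINT x|lborel. w0 x * \<phi> (0, x)) = 0)"

definition diag_solution :: "real \<Rightarrow> real \<Rightarrow> (real \<Rightarrow> real) \<Rightarrow> (real \<Rightarrow> real)
    \<Rightarrow> (real \<times> real \<Rightarrow> real) \<Rightarrow> (real \<times> real \<Rightarrow> real) \<Rightarrow> bool" where
  "diag_solution c \<epsilon> a0 b0 a b \<longleftrightarrow>
     a \<in> borel_measurable lborel \<and> b \<in> borel_measurable lborel \<and>
     weak_eq (-c) a (\<lambda>z. G c (a z) (b z) / \<epsilon>) a0 \<and>
     weak_eq c b (\<lambda>z. G c (a z) (b z) / \<epsilon>) b0"

end

theory Submission
  imports Defs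
begin


declare Ck.simps(2)[simp del]

lemma Ck_SucE:
  assumes "Ck (Suc n) f"
  obtains f1 f2 where "\<And>z. (f has_derivative (\<lambda>(s,y). s * f1 z + y * f2 z)) (at z)"
     "Ck n f1" "Ck n f2"
  using assms unfolding Ck.simps(2) by blast

lemma Ck_SucI:
  assumes "\<And>z. (f has_derivative (\<lambda>(s,y). s * fa z + y * fb z)) (at z)"
     "Ck n fa" "Ck n fb"
  shows "Ck (Suc n) f"
  using assms unfolding Ck.simps(2) by blast

lemma Ck_Suc_cont: "Ck (Suc n) f \<Longrightarrow> continuous_on UNIV f"
  by (erule Ck_SucE) (metis continuous_at_imp_continuous_on has_derivative_continuous)

lemma Ck_cont: "Ck n f \<Longrightarrow> continuous_on UNIV f"
proof (cases n)
  case 0 then show "Ck n f \<Longrightarrow> continuous_on UNIV f" by simp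
next
  case (Suc m) then show "Ck n f \<Longrightarrow> continuous_on UNIV f" using Ck_Suc_cont by blast
qed

lemma Ck_Suc_imp: "Ck (Suc n) f \<Longrightarrow> Ck n f"
proof (induction n arbitrary: f)
  case 0
  then show ?case using Ck_Suc_cont[of 0 f] by (simp only: Ck.simps(1))
next
  case (Suc n)
  from Suc.prems obtain f1 f2 where "\<And>z. (f has_derivative (\<lambda>(s,y). s * f1 z + y * f2 z)) (at z)"
     "Ck (Suc n) f1" "Ck (Suc n) f2" by (erule Ck_SucE)
  then show ?case using Suc.IH by (intro Ck_SucI[where fa=f1 and fb=f2]) auto
qed

lemma Ck_le: "m \<le> n \<Longrightarrow> Ck n f \<Longrightarrow> Ck m f"
  by (induction rule: inc_induct) (auto intro: Ck_Suc_imp)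

lemma Ck_const: "Ck n (\<lambda>z. c)"
proof (induction n arbitrary: c)
  case 0 then show ?case by simp
next
  case (Suc n)
  show ?case
    by (rule Ck_SucI[where fa="\<lambda>z. 0" and fb="\<lambda>z. 0"]) (auto intro!: derivative_eq_intros simp: Suc)
qed

lemma Ck_fst: "Ck n (\<lambda>z. fst z)"
proof (cases n)
  case 0 then show ?thesis by (simp add: continuous_on_fst)
next
  case (Suc m)
  show ?thesis unfolding Suc
    by (rule Ck_SucI[where fa="\<lambda>z. 1" and fb="\<lambda>z. 0"]) (auto intro!: derivative_eq_intros Ck_const simp: case_prod_beta)
qed

lemma Ck_snd: "Ck n (\<lambda>z. snd z)"
proof (cases n)
  case 0 then show ?thesis by (simp add: continuous_on_snd)
next
  case (Suc m)
  show ?thesis unfolding Suc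
    by (rule Ck_SucI[where fa="\<lambda>z. 0" and fb="\<lambda>z. 1"]) (auto intro!: derivative_eq_intros Ck_const simp: case_prod_beta)
qed

lemma Ck_add: "Ck n f \<Longrightarrow> Ck n g \<Longrightarrow> Ck n (\<lambda>z. f z + g z)"
proof (induction n arbitrary: f g)
  case 0 then show ?case by (auto intro: continuous_on_add)
next
  case (Suc n)
  obtain f1 f2 where f: "\<And>z. (f has_derivative (\<lambda>(s,y). s * f1 z + y * f2 z)) (at z)"
     "Ck n f1" "Ck n f2" using Suc.prems(1) by (erule Ck_SucE)
  obtain g1 g2 where g: "\<And>z. (g has_derivative (\<lambda>(s,y). s * g1 z + y * g2 z)) (at z)"
     "Ck n g1" "Ck n g2" using Suc.prems(2) by (erule Ck_SucE)
  show ?case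
  proof (rule Ck_SucI[where fa="\<lambda>z. f1 z + g1 z" and fb="\<lambda>z. f2 z + g2 z"])
    fix z
    show "((\<lambda>z. f z + g z) has_derivative (\<lambda>(s, y). s * (f1 z + g1 z) + y * (f2 z + g2 z))) (at z)"
      using has_derivative_add[OF f(1)[of z] g(1)[of z]]
      by (rule has_derivative_eq_rhs) (auto simp: algebra_simps case_prod_beta)
  qed (use f g Suc.IH in auto)
qed

lemma Ck_mult: "Ck n f \<Longrightarrow> Ck n g \<Longrightarrow> Ck n (\<lambda>z. f z * g z)"
proof (induction n arbitrary: f g)
  case 0 then show ?case by (auto intro: continuous_on_mult)
next
  case (Suc n)
  obtain f1 f2 where f: "\<And>z. (f has_derivative (\<lambda>(s,y). s * f1 z + y * f2 z)) (at z)"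
     "Ck n f1" "Ck n f2" using Suc.prems(1) by (erule Ck_SucE)
  obtain g1 g2 where g: "\<And>z. (g has_derivative (\<lambda>(s,y). s * g1 z + y * g2 z)) (at z)"
     "Ck n g1" "Ck n g2" using Suc.prems(2) by (erule Ck_SucE)
  have fn: "Ck n f" "Ck n g" using Suc.prems Ck_Suc_imp by auto
  show ?case
  proof (rule Ck_SucI[where fa="\<lambda>z. f1 z * g z + f z * g1 z" and fb="\<lambda>z. f2 z * g z + f z * g2 z"])
    fix z
    show "((\<lambda>z. f z * g z) has_derivative (\<lambda>(s, y). s * (f1 z * g z + f z * g1 z) + y * (f2 z * g z + f z * g2 z))) (at z)"
      using has_derivative_mult[OF f(1)[of z] g(1)[of z]]
      by (rule has_derivative_eq_rhs) (auto simp: algebra_simps case_prod_beta)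
  qed (use f g fn Suc.IH Ck_add in auto)
qed

lemma Ck_translate: "Ck n f \<Longrightarrow> Ck n (\<lambda>z. f (z + c))"
proof (induction n arbitrary: f)
  case 0 then show ?case
    by (auto intro!: continuous_on_compose2[of UNIV f] continuous_intros)
next
  case (Suc n)
  obtain f1 f2 where f: "\<And>z. (f has_derivative (\<lambda>(s,y). s * f1 z + y * f2 z)) (at z)"
     "Ck n f1" "Ck n f2" using Suc.prems(1) by (erule Ck_SucE)
  show ?case
  proof (rule Ck_SucI[where fa="\<lambda>z. f1 (z + c)" and fb="\<lambda>z. f2 (z + c)"])
    fix z
    have "((\<lambda>z. z + c) has_derivative (\<lambda>h. h)) (at z)" by (auto intro!: derivative_eq_intros)
    from has_derivative_compose[OF this f(1)[of "z + c"]]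
    show "((\<lambda>z. f (z + c)) has_derivative (\<lambda>(s, y). s * f1 (z + c) + y * f2 (z + c))) (at z)"
      by (simp add: o_def)
  qed (use f Suc.IH in auto)
qed

lemma smooth2_mult: "smooth2 f \<Longrightarrow> smooth2 g \<Longrightarrow> smooth2 (\<lambda>z. f z * g z)"
  by (auto simp: smooth2_def intro: Ck_mult)

lemma smooth2_add: "smooth2 f \<Longrightarrow> smooth2 g \<Longrightarrow> smooth2 (\<lambda>z. f z + g z)"
  by (auto simp: smooth2_def intro: Ck_add)

lemma smooth2_translate: "smooth2 f \<Longrightarrow> smooth2 (\<lambda>z. f (z + c))"
  by (auto simp: smooth2_def intro: Ck_translate)

lemma bounded_linear_prod_real:
  fixes l :: "real \<times> real \<Rightarrow> real"
  assumes "bounded_linear l"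
  shows "l = (\<lambda>z. fst z * l (1,0) + snd z * l (0,1))"
proof
  fix z :: "real \<times> real"
  have lin: "linear l" using assms bounded_linear.linear by blast
  obtain a b where z: "z = (a,b)" by (cases z)
  have "l (a *\<^sub>R (1,0) + b *\<^sub>R (0,1)) = a * l (1,0) + b * l (0,1)"
    unfolding linear_add[OF lin] linear_scale[OF lin] by simp
  then show "l z = fst z * l (1,0) + snd z * l (0,1)" by (simp add: z)
qed

lemma smooth2_poly:
  fixes p :: "real \<times> real \<Rightarrow> real"
  assumes "real_polynomial_function p"
  shows "smooth2 p"
  using assms
proof induction
  case (linear f)
  then show ?case
    by (subst bounded_linear_prod_real[OF linear])
      (auto simp: smooth2_def intro!: Ck_add Ck_mult Ck_fst Ck_snd Ck_const)
next
  case (const c) then show ?case by (auto simp: smooth2_def intro: Ck_const)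
qed (auto intro: smooth2_add smooth2_mult)


lemma partialsD: "partials f ft fx \<Longrightarrow> (f has_derivative (\<lambda>(s,y). s * ft z + y * fx z)) (at z)"
  unfolding partials_def by blast

lemma partials_unique:
  assumes "partials f a b" "partials f a' b'"
  shows "a = a' \<and> b = b'"
proof -
  have "\<And>z. (\<lambda>(s,y). s * a z + y * b z) = (\<lambda>(s,y). s * a' z + y * b' z)"
    using assms unfolding partials_def by (metis has_derivative_unique)
  then have "\<And>z. a z = a' z \<and> b z = b' z"
    by (metis (mono_tags, lifting) case_prod_conv mult_1 mult_zero_left add_0 add.right_neutral)
  then show ?thesis by auto
qed

lemma smooth2_partials:
  assumes "smooth2 f" "partials f ft fx"
  shows "smooth2 ft" "smooth2 fx"
proof -
  have "Ck n ft \<and> Ck n fx" for n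
  proof -
    have "Ck (Suc n) f" using assms by (simp add: smooth2_def)
    then obtain fa fb where "\<And>z. (f has_derivative (\<lambda>(s,y). s * fa z + y * fb z)) (at z)"
      "Ck n fa" "Ck n fb" by (erule Ck_SucE)
    moreover have "partials f fa fb" using calculation(1) by (simp add: partials_def)
    ultimately show ?thesis using partials_unique[OF assms(2)] by metis
  qed
  then show "smooth2 ft" "smooth2 fx" by (auto simp: smooth2_def)
qed

lemma smooth2_cont: "smooth2 f \<Longrightarrow> continuous_on UNIV f"
  by (auto simp: smooth2_def intro: Ck_cont)

lemma smooth2_has_partials:
  assumes "smooth2 f"
  obtains ft fx where "partials f ft fx"
proof -
  have "Ck (Suc 0) f" using assms by (simp add: smooth2_def)
  then obtain fa fb where "\<And>z. (f has_derivative (\<lambda>(s,y). s * fa z + y * fb z)) (at z)"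
     "Ck 0 fa" "Ck 0 fb" by (erule Ck_SucE)
  then show ?thesis using that by (auto simp: partials_def)
qed

lemma partials_zero:
  assumes "partials f ft fx" "closed K" "\<And>z. z \<notin> K \<Longrightarrow> f z = 0" "z \<notin> K"
  shows "ft z = 0" "fx z = 0"
proof -
  have d: "(f has_derivative (\<lambda>(s,y). s * ft z + y * fx z)) (at z)"
    using assms(1) by (rule partialsD)
  have "((\<lambda>_. 0) has_derivative (\<lambda>_. 0)) (at z)" by simp
  then have "(f has_derivative (\<lambda>_. 0)) (at z)"
    by (rule has_derivative_transform_within_open[of _ _ z UNIV "- K"]) (use assms in auto)
  then have e: "(\<lambda>(s,y). s * ft z + y * fx z) = (\<lambda>_. 0::real)"
    using d has_derivative_unique by metis
  show "ft z = 0" using fun_cong[OF e, of "(1,0)"] by simp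
  show "fx z = 0" using fun_cong[OF e, of "(0,1)"] by simp
qed

definition avg :: "real \<Rightarrow> real \<times> real \<Rightarrow> (real \<times> real \<Rightarrow> real) \<Rightarrow> real \<times> real \<Rightarrow> real" where
  "avg q v f z = integral {0..q} (\<lambda>r. f (z + r *\<^sub>R v))"

lemma avg_deriv:
  assumes d: "\<And>z. (f has_derivative (\<lambda>(s,y). s * f1 z + y * f2 z)) (at z)"
    and c1: "continuous_on UNIV f1" and c2: "continuous_on UNIV f2"
  shows "(avg q v f has_derivative (\<lambda>(s,y). s * avg q v f1 z + y * avg q v f2 z)) (at z)"
proof -
  define fx where "fx = (\<lambda>x t. f1 (x + t *\<^sub>R v) *\<^sub>R fst_blinfun + f2 (x + t *\<^sub>R v) *\<^sub>R (snd_blinfun :: (real \<times> real) \<Rightarrow>\<^sub>L real))"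
  have cf: "continuous_on UNIV f"
    using d by (metis continuous_at_imp_continuous_on has_derivative_continuous)
  have app: "blinfun_apply (fx x t) = (\<lambda>(s,y). s * f1 (x + t *\<^sub>R v) + y * f2 (x + t *\<^sub>R v))" for x t
    by (auto simp: fx_def blinfun.bilinear_simps fun_eq_iff)
  have L: "((\<lambda>x. integral (cbox 0 q) (\<lambda>t. f (x + t *\<^sub>R v))) has_derivative integral (cbox 0 q) (fx z)) (at z within UNIV)"
  proof (rule leibniz_rule)
    fix x t
    have "((\<lambda>x. x + t *\<^sub>R v) has_derivative (\<lambda>h. h)) (at x)" by (auto intro!: derivative_eq_intros)
    from has_derivative_compose[OF this d[of "x + t *\<^sub>R v"]]
    show "((\<lambda>x. f (x + t *\<^sub>R v)) has_derivative blinfun_apply (fx x t)) (at x within UNIV)"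
      by (simp add: o_def app)
  next
    fix x :: "real \<times> real"
    show "(\<lambda>t. f (x + t *\<^sub>R v)) integrable_on cbox 0 q"
      by (intro integrable_continuous continuous_on_compose2[OF cf]) (auto intro!: continuous_intros)
  next
    show "continuous_on (UNIV \<times> cbox 0 q) (\<lambda>(x, t). fx x t)"
      unfolding fx_def
      by (auto simp: split_beta intro!: continuous_intros continuous_on_compose2[OF c1] continuous_on_compose2[OF c2])
  qed auto
  have i1: "(\<lambda>t. f1 (z + t *\<^sub>R v)) integrable_on {0..q}"
    by (intro integrable_continuous_interval continuous_on_compose2[OF c1]) (auto intro!: continuous_intros)
  have i2: "(\<lambda>t. f2 (z + t *\<^sub>R v)) integrable_on {0..q}"
    by (intro integrable_continuous_interval continuous_on_compose2[OF c2]) (auto intro!: continuous_intros)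
  have e1: "integral {0..q} (\<lambda>t. f1 (z + t *\<^sub>R v) *\<^sub>R (fst_blinfun :: (real \<times> real) \<Rightarrow>\<^sub>L real)) = integral {0..q} (\<lambda>t. f1 (z + t *\<^sub>R v)) *\<^sub>R fst_blinfun"
    by (rule integral_unique[OF has_integral_scaleR_left[OF integrable_integral[OF i1]]])
  have e2: "integral {0..q} (\<lambda>t. f2 (z + t *\<^sub>R v) *\<^sub>R (snd_blinfun :: (real \<times> real) \<Rightarrow>\<^sub>L real)) = integral {0..q} (\<lambda>t. f2 (z + t *\<^sub>R v)) *\<^sub>R snd_blinfun"
    by (rule integral_unique[OF has_integral_scaleR_left[OF integrable_integral[OF i2]]])
  have "integral (cbox 0 q) (fx z) = integral (cbox 0 q) (\<lambda>t. f1 (z + t *\<^sub>R v)) *\<^sub>R fst_blinfun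
      + integral (cbox 0 q) (\<lambda>t. f2 (z + t *\<^sub>R v)) *\<^sub>R snd_blinfun"
    unfolding fx_def
    by (subst integral_add) (auto intro!: integrable_on_scaleR_left i1 i2 simp: e1 e2)
  then have BA: "blinfun_apply (integral (cbox 0 q) (fx z)) = (\<lambda>(s,y). s * avg q v f1 z + y * avg q v f2 z)"
    by (auto simp: avg_def blinfun.bilinear_simps fun_eq_iff)
  have eqf: "avg q v f = (\<lambda>x. integral (cbox 0 q) (\<lambda>t. f (x + t *\<^sub>R v)))"
    by (auto simp: avg_def fun_eq_iff)
  show ?thesis using L unfolding eqf BA .
qed

lemma Ck_avg: "Ck (Suc n) f \<Longrightarrow> Ck n (avg q v f)"
proof (induction n arbitrary: f)
  case 0
  then obtain fa fb where d: "\<And>z. (f has_derivative (\<lambda>(s,y). s * fa z + y * fb z)) (at z)"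
     "Ck 0 fa" "Ck 0 fb" by (erule Ck_SucE)
  have "\<And>z. (avg q v f has_derivative (\<lambda>(s,y). s * avg q v fa z + y * avg q v fb z)) (at z)"
    using d by (intro avg_deriv) auto
  then show ?case
    by (simp only: Ck.simps(1)) (metis continuous_at_imp_continuous_on has_derivative_continuous)
next
  case (Suc n)
  from Suc.prems obtain fa fb where d: "\<And>z. (f has_derivative (\<lambda>(s,y). s * fa z + y * fb z)) (at z)"
     "Ck (Suc n) fa" "Ck (Suc n) fb" by (erule Ck_SucE)
  show ?case
  proof (rule Ck_SucI[where fa="avg q v fa" and fb="avg q v fb"])
    show "\<And>z. (avg q v f has_derivative (\<lambda>(s,y). s * avg q v fa z + y * avg q v fb z)) (at z)"
      using d by (intro avg_deriv) (auto intro: Ck_cont)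
  qed (use d Suc.IH in auto)
qed

lemma smooth2_avg: "smooth2 f \<Longrightarrow> smooth2 (avg q v f)"
  by (auto simp: smooth2_def intro: Ck_avg)

lemma partials_avg:
  assumes "smooth2 f" "partials f ft fx"
  shows "partials (avg q v f) (avg q v ft) (avg q v fx)"
  using assms smooth2_partials[OF assms] unfolding partials_def
  by (intro allI avg_deriv) (auto intro: smooth2_cont)


lemma bcs_integrable:
  fixes f :: "'a::euclidean_space \<Rightarrow> real"
  assumes "f \<in> borel_measurable borel" "compact K" "\<And>z. z \<notin> K \<Longrightarrow> f z = 0" "\<And>z. \<bar>f z\<bar> \<le> C"
  shows "integrable lborel f"
proof -
  have "emeasure lborel K < \<infinity>" using emeasure_compact_finite[OF assms(2)] .
  then have "integrable lborel (indicator K :: 'a \<Rightarrow> real)"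
    using assms(2) by (intro integrable_real_indicator) (auto intro: borel_compact)
  then have ind: "integrable lborel (\<lambda>z. C * indicator K z)" by simp
  have m: "f \<in> borel_measurable lborel" using assms(1) by simp
  have "AE x in lborel. norm (f x) \<le> norm (C * indicator K x)"
  proof (rule AE_I2)
    fix x
    have "\<bar>f x\<bar> \<le> C" by (rule assms(4))
    then show "norm (f x) \<le> norm (C * indicator K x :: real)"
      using assms(3)[of x] by (cases "x \<in> K") auto
  qed
  then show ?thesis using Bochner_Integration.integrable_bound[OF ind m] by blast
qed

lemma integral_translate:
  fixes f :: "'a::euclidean_space \<Rightarrow> real"
  assumes "f \<in> borel_measurable borel"
  shows "(\<integral>z. f (z + c) \<partial>lborel) = integral\<^sup>L lborel f"
proof -
  have "integral\<^sup>L lborel f = integral\<^sup>L (distr lborel borel ((+) c)) f"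
    by (simp add: lborel_distr_plus)
  also have "\<dots> = (\<integral>z. f (c + z) \<partial>lborel)"
    using assms by (subst integral_distr) auto
  finally show ?thesis by (simp add: add.commute)
qed

lemma shear:
  fixes g :: "real \<times> real \<Rightarrow> real" and lam :: real
  assumes m: "g \<in> borel_measurable borel" and i1: "integrable lborel g"
    and i2: "integrable lborel (\<lambda>(t,y). g (t, y + lam * t))"
  shows "integral\<^sup>L lborel g = (\<integral>y. \<integral>t. g (t, y + lam * t) \<partial>lborel \<partial>lborel)"
proof -
  have i1': "integrable (lborel \<Otimes>\<^sub>M lborel) g" using i1 by (simp add: lborel_prod)
  have i2': "integrable (lborel \<Otimes>\<^sub>M lborel) (case_prod (\<lambda>t y. g (t, y + lam * t)))"
    using i2 by (simp add: lborel_prod)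
  have "integral\<^sup>L lborel g = integral\<^sup>L (lborel \<Otimes>\<^sub>M lborel) g" by (simp add: lborel_prod)
  also have "\<dots> = (\<integral>t. \<integral>x. g (t, x) \<partial>lborel \<partial>lborel)"
    by (rule lborel_pair.integral_fst'[OF i1', symmetric])
  also have "\<dots> = (\<integral>t. \<integral>y. g (t, y + lam * t) \<partial>lborel \<partial>lborel)"
  proof (rule Bochner_Integration.integral_cong[OF refl])
    fix t
    show "(\<integral>x. g (t, x) \<partial>lborel) = (\<integral>y. g (t, y + lam * t) \<partial>lborel)"
      using lborel_integral_real_affine[of 1 "\<lambda>x. g (t, x)" "lam * t"] by (simp add: add.commute)
  qed
  also have "\<dots> = (\<integral>y. \<integral>t. g (t, y + lam * t) \<partial>lborel \<partial>lborel)"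
    by (rule lborel_pair.Fubini_integral[OF i2', symmetric])
  finally show ?thesis .
qed


lemma eps_zero:
  fixes x A :: real
  assumes "A \<ge> 0" "\<And>e. e > 0 \<Longrightarrow> \<bar>x\<bar> \<le> A * e"
  shows "x = 0"
proof (rule ccontr)
  assume "x \<noteq> 0"
  then have "\<bar>x\<bar> > 0" by simp
  define e where "e = \<bar>x\<bar> / (2 * (A + 1))"
  have "e > 0" using \<open>\<bar>x\<bar> > 0\<close> assms(1) by (simp add: e_def)
  then have "\<bar>x\<bar> \<le> A * e" by (rule assms(2))
  also have "A * e < \<bar>x\<bar>"
  proof -
    have "A * e = \<bar>x\<bar> * (A / (2 * (A + 1)))" by (simp add: e_def)
    also have "A / (2 * (A + 1)) < 1" using assms(1) by (simp add: field_simps)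
    then have "\<bar>x\<bar> * (A / (2 * (A + 1))) < \<bar>x\<bar> * 1"
      using \<open>\<bar>x\<bar> > 0\<close> by (intro mult_strict_left_mono) auto
    finally show ?thesis by simp
  qed
  finally show False by simp
qed

lemma fund_cont:
  fixes f :: "real \<times> real \<Rightarrow> real"
  assumes m: "f \<in> borel_measurable borel" and K: "compact K" and z: "\<And>z. z \<notin> K \<Longrightarrow> f z = 0"
    and b: "\<And>z. \<bar>f z\<bar> \<le> C"
    and P: "\<And>p. real_polynomial_function p \<Longrightarrow> (\<integral>z. f z * p z \<partial>lborel) = 0"
    and g: "continuous_on UNIV g" "\<And>z. \<bar>g z\<bar> \<le> 1"
  shows "(\<integral>z. f z * g z \<partial>lborel) = 0"
proof (rule eps_zero)
  have C0: "C \<ge> 0" using b[of 0] by linarith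
  show "C * measure lborel K \<ge> 0" using C0 by simp
  fix e :: real assume e: "e > 0"
  have gK: "continuous_on K g" using g(1) continuous_on_subset by blast
  obtain p where p: "real_polynomial_function p" "\<And>x. x \<in> K \<Longrightarrow> \<bar>g x - p x\<bar> < e"
    using Stone_Weierstrass_real_polynomial_function[OF K gK e] by blast
  have gm: "g \<in> borel_measurable borel" using g(1) by (rule borel_measurable_continuous_onI)
  have pm: "p \<in> borel_measurable borel"
    using p(1) by (intro borel_measurable_continuous_onI)
      (simp add: continuous_on_polymonial_function real_polynomial_function_eq)
  have ig: "integrable lborel (\<lambda>z. f z * g z)"
  proof (rule bcs_integrable[OF _ K, of _ C])
    show "(\<lambda>z. f z * g z) \<in> borel_measurable borel" using m gm by measurable
    show "\<And>z. z \<notin> K \<Longrightarrow> f z * g z = 0" using z by simp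
    show "\<bar>f z * g z\<bar> \<le> C" for z
      using b[of z] g(2)[of z] mult_mono[of "\<bar>f z\<bar>" C "\<bar>g z\<bar>" 1] by (simp add: abs_mult)
  qed
  have ip: "integrable lborel (\<lambda>z. f z * p z)"
  proof (rule bcs_integrable[OF _ K, of _ "C * (1 + e)"])
    show "(\<lambda>z. f z * p z) \<in> borel_measurable borel" using m pm by measurable
    show "\<And>z. z \<notin> K \<Longrightarrow> f z * p z = 0" using z by simp
    show "\<bar>f z * p z\<bar> \<le> C * (1 + e)" for z
    proof (cases "z \<in> K")
      case True
      then have "\<bar>p z\<bar> \<le> 1 + e" using p(2)[of z] g(2)[of z] by linarith
      then show ?thesis using b[of z] by (simp add: abs_mult mult_mono)
    next
      case False then show ?thesis using z C0 e by simp
    qed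
  qed
  have iK: "integrable lborel (\<lambda>z. e * indicator K z :: real)"
    using emeasure_compact_finite[OF K] K
    by (intro integrable_mult_right integrable_real_indicator) (auto intro: borel_compact)
  have "(\<integral>z. f z * g z \<partial>lborel) = (\<integral>z. f z * g z \<partial>lborel) - (\<integral>z. f z * p z \<partial>lborel)"
    using P[OF p(1)] by simp
  also have "\<dots> = (\<integral>z. f z * (g z - p z) \<partial>lborel)"
    using ig ip by (simp add: right_diff_distrib)
  finally have eq: "(\<integral>z. f z * g z \<partial>lborel) = (\<integral>z. f z * (g z - p z) \<partial>lborel)" .
  have "\<bar>\<integral>z. f z * (g z - p z) \<partial>lborel\<bar> \<le> (\<integral>z. \<bar>f z * (g z - p z)\<bar> \<partial>lborel)"
    by (rule integral_abs_bound)
  also have "\<dots> \<le> (\<integral>z. C * (e * indicator K z) \<partial>lborel)"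
  proof (rule integral_mono)
    show "integrable lborel (\<lambda>z. \<bar>f z * (g z - p z)\<bar>)"
      using ig ip by (simp add: right_diff_distrib)
    show "integrable lborel (\<lambda>z. C * (e * indicator K z))" using iK by simp
    show "\<bar>f z * (g z - p z)\<bar> \<le> C * (e * indicator K z)" for z
    proof (cases "z \<in> K")
      case True
      then show ?thesis using b[of z] p(2)[of z] by (simp add: abs_mult mult_mono)
    next
      case False then show ?thesis using z by simp
    qed
  qed
  also have "\<dots> = C * measure lborel K * e"
    using iK by (simp add: algebra_simps)
  finally show "\<bar>\<integral>z. f z * g z \<partial>lborel\<bar> \<le> C * measure lborel K * e" using eq by simp
qed


definition ramp :: "nat \<Rightarrow> real \<Rightarrow> real \<Rightarrow> real \<Rightarrow> real" where
  "ramp n lo hi s = min 1 (max 0 (real n * (s - lo) + 1)) * min 1 (max 0 (real n * (hi - s) + 1))"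

lemma ramp_bound: "\<bar>ramp n lo hi s\<bar> \<le> 1"
  unfolding ramp_def by (auto simp: abs_mult intro!: mult_le_one)

lemma ramp_cont: "continuous_on UNIV (ramp n lo hi)"
  unfolding ramp_def by (intro continuous_intros)

lemma ramp_lim: "(\<lambda>n. ramp n lo hi s) \<longlonglongrightarrow> indicator {lo..hi} s"
proof (cases "lo \<le> s \<and> s \<le> hi")
  case True
  then have "ramp n lo hi s = 1" for n
    unfolding ramp_def by (auto simp: min_def max_def)
  then show ?thesis using True by simp
next
  case False
  then have "s < lo \<or> hi < s" by auto
  then have ev: "eventually (\<lambda>n. ramp n lo hi s = 0) sequentially"
  proof
    assume "s < lo"
    obtain N :: nat where N: "real N > 1 / (lo - s)" using reals_Archimedean2 by blast
    show ?thesis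
    proof (rule eventually_sequentiallyI[of N])
      fix n assume "N \<le> n"
      then have "real n > 1 / (lo - s)" using N by (meson of_nat_le_iff order.strict_trans2)
      then have "real n * (lo - s) > 1" using \<open>s < lo\<close> by (simp add: field_simps)
      then have "real n * (s - lo) + 1 < 0" by (simp add: algebra_simps)
      then show "ramp n lo hi s = 0" unfolding ramp_def by (simp add: max_def)
    qed
  next
    assume "hi < s"
    obtain N :: nat where N: "real N > 1 / (s - hi)" using reals_Archimedean2 by blast
    show ?thesis
    proof (rule eventually_sequentiallyI[of N])
      fix n assume "N \<le> n"
      then have "real n > 1 / (s - hi)" using N by (meson of_nat_le_iff order.strict_trans2)
      then have "real n * (s - hi) > 1" using \<open>hi < s\<close> by (simp add: field_simps)
      then have "real n * (hi - s) + 1 < 0" by (simp add: algebra_simps)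
      then show "ramp n lo hi s = 0" unfolding ramp_def by (simp add: max_def)
    qed
  qed
  have "(\<lambda>n. ramp n lo hi s) \<longlonglongrightarrow> 0"
    by (rule tendsto_eventually) (use ev in \<open>auto elim: eventually_mono\<close>)
  then show ?thesis using False by simp
qed

lemma fund_box:
  fixes f :: "real \<times> real \<Rightarrow> real"
  assumes m: "f \<in> borel_measurable borel" and K: "compact K" and z: "\<And>z. z \<notin> K \<Longrightarrow> f z = 0"
    and b: "\<And>z. \<bar>f z\<bar> \<le> C"
    and P: "\<And>p. real_polynomial_function p \<Longrightarrow> (\<integral>z. f z * p z \<partial>lborel) = 0"
  shows "(\<integral>z. indicator (cbox a b) z * f z \<partial>lborel) = 0"
proof -
  obtain a1 a2 b1 b2 where ab: "a = (a1, a2)" "b = (b1, b2)" by (cases a, cases b) auto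
  define g where "g n z = ramp n a1 b1 (fst z) * ramp n a2 b2 (snd z)" for n z
  have gc: "continuous_on UNIV (g n)" for n
    unfolding g_def
    by (intro continuous_intros continuous_on_compose2[OF ramp_cont]) auto
  have gb: "\<bar>g n z\<bar> \<le> 1" for n z
    unfolding g_def using ramp_bound[of n a1 b1 "fst z"] ramp_bound[of n a2 b2 "snd z"]
    by (simp add: abs_mult mult_le_one)
  have g0: "(\<integral>z. f z * g n z \<partial>lborel) = 0" for n
    by (rule fund_cont[OF m K z b P gc gb])
  have lim: "(\<lambda>n. g n z) \<longlonglongrightarrow> indicator (cbox a b) z" for z
  proof -
    have "(\<lambda>n. g n z) \<longlonglongrightarrow> indicator {a1..b1} (fst z) * indicator {a2..b2} (snd z)"
      unfolding g_def by (intro tendsto_mult ramp_lim)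
    moreover have "indicator {a1..b1} (fst z) * indicator {a2..b2} (snd z) = (indicator (cbox a b) z :: real)"
      by (cases z) (auto simp: ab indicator_def)
    ultimately show ?thesis by simp
  qed
  have gm: "g n \<in> borel_measurable borel" for n using gc by (rule borel_measurable_continuous_onI)
  have iK: "integrable lborel (\<lambda>z. C * indicator K z :: real)"
    using emeasure_compact_finite[OF K] K
    by (intro integrable_mult_right integrable_real_indicator) (auto intro: borel_compact)
  have "(\<lambda>n. \<integral>z. f z * g n z \<partial>lborel) \<longlonglongrightarrow> (\<integral>z. f z * indicator (cbox a b) z \<partial>lborel)"
  proof (rule integral_dominated_convergence[where w="\<lambda>z. C * indicator K z"])
    show "(\<lambda>z. f z * indicator (cbox a b) z) \<in> borel_measurable lborel" using m by measurable
    show "(\<lambda>z. f z * g n z) \<in> borel_measurable lborel" for n using m gm by measurable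
    show "integrable lborel (\<lambda>z. C * indicator K z)" by (rule iK)
    show "AE z in lborel. (\<lambda>n. f z * g n z) \<longlonglongrightarrow> f z * indicator (cbox a b) z"
      by (intro AE_I2 tendsto_mult tendsto_const lim)
    show "AE z in lborel. norm (f z * g n z) \<le> C * indicator K z" for n
    proof (intro AE_I2)
      fix z
      show "norm (f z * g n z) \<le> C * indicator K z"
      proof (cases "z \<in> K")
        case True
        then show ?thesis using b[of z] gb[of n z] mult_mono[of "\<bar>f z\<bar>" C "\<bar>g n z\<bar>" 1]
          by (simp add: abs_mult)
      next
        case False then show ?thesis using z by simp
      qed
    qed
  qed
  then have "(\<lambda>n. 0) \<longlonglongrightarrow> (\<integral>z. f z * indicator (cbox a b) z \<partial>lborel)" using g0 by simp
  then show ?thesis by (simp add: LIMSEQ_const_iff mult.commute)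
qed

lemma fund_ae:
  fixes f :: "real \<times> real \<Rightarrow> real"
  assumes m: "f \<in> borel_measurable borel" and K: "compact K" and z: "\<And>z. z \<notin> K \<Longrightarrow> f z = 0"
    and b: "\<And>z. \<bar>f z\<bar> \<le> C"
    and P: "\<And>p. real_polynomial_function p \<Longrightarrow> (\<integral>z. f z * p z \<partial>lborel) = 0"
  shows "AE z in lborel. f z = 0"
proof -
  have fi: "integrable lborel f" by (rule bcs_integrable[OF m K z b])
  have si: "set_integrable lborel (cbox a b) f" for a b
    unfolding set_integrable_def using fi by (intro integrable_mult_indicator) auto
  have hk: "f integrable_on cbox a b" for a b by (rule set_borel_integral_eq_integral(1)[OF si])
  have i0: "integral (cbox a b) f = 0" for a b
    using set_borel_integral_eq_integral(2)[OF si, of a b] fund_box[OF m K z b P, of a b]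
    by (simp add: set_lebesgue_integral_def)
  obtain N where N: "negligible N"
    "\<And>x e. \<lbrakk>x \<notin> N; 0 < e\<rbrakk> \<Longrightarrow> \<exists>d>0. \<forall>h. 0 < h \<and> h < d \<longrightarrow>
        norm (integral (cbox x (x + h *\<^sub>R One)) f /\<^sub>R h ^ DIM(real \<times> real) - f x) < e"
    using integrable_ccontinuous_explicit[OF hk] by blast
  have fz: "f x = 0" if xN: "x \<notin> N" for x
  proof (rule eps_zero[of 1])
    fix e :: real assume "e > 0"
    then obtain d where "d > 0" and d: "\<And>h. 0 < h \<and> h < d \<Longrightarrow>
        norm (integral (cbox x (x + h *\<^sub>R One)) f /\<^sub>R h ^ DIM(real \<times> real) - f x) < e"
      using N(2)[OF xN \<open>e > 0\<close>] by blast
    have "norm (integral (cbox x (x + (d/2) *\<^sub>R One)) f /\<^sub>R (d/2) ^ DIM(real \<times> real) - f x) < e"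
      using d[of "d/2"] \<open>d > 0\<close> by simp
    then show "\<bar>f x\<bar> \<le> 1 * e" using i0 by simp
  qed simp
  have "N \<in> null_sets lebesgue" using N(1) by (simp add: negligible_iff_null_sets)
  then have "AE x in lebesgue. x \<notin> N" by (rule AE_not_in)
  then have "AE x in lebesgue. f x = 0" by (rule AE_mp) (auto intro: fz)
  then show ?thesis by (simp add: AE_completion_iff)
qed


lemma meas_comp: "g \<in> borel_measurable borel \<Longrightarrow> continuous_on UNIV T \<Longrightarrow> (\<lambda>x. g (T x)) \<in> borel_measurable borel"
  by (rule measurable_compose[OF borel_measurable_continuous_onI])

lemma cs_bounded:
  fixes f :: "'a::euclidean_space \<Rightarrow> real"
  assumes "continuous_on UNIV f" "compact K" "\<And>z. z \<notin> K \<Longrightarrow> f z = 0"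
  obtains C where "C \<ge> 0" "\<And>z. \<bar>f z\<bar> \<le> C"
proof -
  have "compact (f ` K)" by (rule compact_continuous_image[OF continuous_on_subset[OF assms(1)] assms(2)]) simp
  then have "bounded (f ` K)" by (rule compact_imp_bounded)
  then obtain C where C0: "\<forall>x\<in>f ` K. norm x \<le> C" unfolding bounded_pos by blast
  have C: "\<And>x. x \<in> K \<Longrightarrow> norm (f x) \<le> C" using C0 by blast
  show ?thesis
  proof (rule that[of "max C 0"])
    show "\<bar>f z\<bar> \<le> max C 0" for z using C[of z] assms(3)[of z] by (cases "z \<in> K") auto
  qed auto
qed

lemma avg_dir:
  assumes p: "partials \<psi> \<psi>t \<psi>x" and c: "continuous_on UNIV \<psi>t" "continuous_on UNIV \<psi>x" and q: "q \<ge> 0"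
  shows "avg q (1,lam) \<psi>t z + lam * avg q (1,lam) \<psi>x z = \<psi> (z + q *\<^sub>R (1,lam)) - \<psi> z"
proof -
  let ?v = "(1::real, lam)"
  have d: "((\<lambda>r. \<psi> (z + r *\<^sub>R ?v)) has_vector_derivative (\<psi>t (z + r *\<^sub>R ?v) + lam * \<psi>x (z + r *\<^sub>R ?v))) (at r within {0..q})" for r
  proof -
    have "((\<lambda>r. z + r *\<^sub>R ?v) has_derivative (\<lambda>h. h *\<^sub>R ?v)) (at r within {0..q})"
      by (auto intro!: derivative_eq_intros)
    from has_derivative_compose[OF this partialsD[OF p, of "z + r *\<^sub>R ?v"]]
    show ?thesis unfolding has_vector_derivative_def o_def
      by (rule has_derivative_eq_rhs) (auto simp: fun_eq_iff algebra_simps)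
  qed
  have F: "((\<lambda>r. \<psi>t (z + r *\<^sub>R ?v) + lam * \<psi>x (z + r *\<^sub>R ?v)) has_integral (\<psi> (z + q *\<^sub>R ?v) - \<psi> (z + 0 *\<^sub>R ?v))) {0..q}"
    by (rule fundamental_theorem_of_calculus[OF q]) (use d in auto)
  have z0: "z + 0 *\<^sub>R ?v = z" by (simp only: scale_zero_left add_0_right)
  have i1: "(\<lambda>r. \<psi>t (z + r *\<^sub>R ?v)) integrable_on {0..q}"
    by (intro integrable_continuous_interval continuous_on_compose2[OF c(1)]) (auto intro!: continuous_intros)
  have i2: "(\<lambda>r. \<psi>x (z + r *\<^sub>R ?v)) integrable_on {0..q}"
    by (intro integrable_continuous_interval continuous_on_compose2[OF c(2)]) (auto intro!: continuous_intros)
  have "integral {0..q} (\<lambda>r. \<psi>t (z + r *\<^sub>R ?v) + lam * \<psi>x (z + r *\<^sub>R ?v)) = \<psi> (z + q *\<^sub>R ?v) - \<psi> z"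
    using integral_unique[OF F] unfolding z0 .
  moreover have "integral {0..q} (\<lambda>r. \<psi>t (z + r *\<^sub>R ?v) + lam * \<psi>x (z + r *\<^sub>R ?v))
     = avg q ?v \<psi>t z + lam * avg q ?v \<psi>x z"
  proof -
    have "integral {0..q} (\<lambda>r. \<psi>t (z + r *\<^sub>R ?v) + lam * \<psi>x (z + r *\<^sub>R ?v))
      = integral {0..q} (\<lambda>r. \<psi>t (z + r *\<^sub>R ?v)) + integral {0..q} (\<lambda>r. lam * \<psi>x (z + r *\<^sub>R ?v))"
      by (rule integral_add[OF i1 integrable_on_mult_right[OF i2]])
    also have "\<dots> = avg q ?v \<psi>t z + lam * avg q ?v \<psi>x z"
      unfolding avg_def by (simp only: integral_mult_right)
    finally show ?thesis .
  qed
  ultimately show ?thesis by simp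
qed


locale RS =
  fixes w S :: "real \<times> real \<Rightarrow> real" and lam B :: real
  assumes wm: "w \<in> borel_measurable borel" and Sm: "S \<in> borel_measurable borel"
    and wb: "\<And>z. \<bar>w z\<bar> \<le> B" and Sb: "\<And>z. \<bar>S z\<bar> \<le> B"
    and weak: "\<And>\<psi> \<psi>t \<psi>x. smooth2 \<psi> \<Longrightarrow> compact_support_in \<psi> ({0<..} \<times> UNIV) \<Longrightarrow> partials \<psi> \<psi>t \<psi>x
       \<Longrightarrow> (\<integral>z. w z * \<psi>t z + lam * w z * \<psi>x z + S z * \<psi> z \<partial>lborel) = 0"
begin

definition J :: "real \<Rightarrow> real \<times> real \<Rightarrow> real" where
  "J q z = (\<integral>r. indicator {0..q} r * S (z - r *\<^sub>R (1,lam)) \<partial>lborel)"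

lemma B0: "B \<ge> 0" using wb[of 0] by linarith

lemma prod_meas:
  fixes f :: "('a::euclidean_space \<times> 'b::euclidean_space) \<Rightarrow> real"
  shows "f \<in> borel_measurable borel \<Longrightarrow> f \<in> borel_measurable (lborel \<Otimes>\<^sub>M lborel)"
  by (simp add: lborel_prod)

lemma J_meas: "J q \<in> borel_measurable borel"
proof -
  have "(\<lambda>p::(real \<times> real) \<times> real. indicator {0..q} (snd p) * S (fst p - snd p *\<^sub>R (1,lam))) \<in> borel_measurable borel"
  proof (intro borel_measurable_times)
    show "(\<lambda>p::(real \<times> real) \<times> real. indicator {0..q} (snd p) :: real) \<in> borel_measurable borel"
      by (rule meas_comp[where g="indicator {0..q}"]) (auto intro: continuous_intros)
    show "(\<lambda>p::(real \<times> real) \<times> real. S (fst p - snd p *\<^sub>R (1, lam))) \<in> borel_measurable borel"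
      by (rule meas_comp[OF Sm]) (auto intro!: continuous_intros)
  qed
  then have "(\<lambda>(z, r). indicator {0..q} r * S (z - r *\<^sub>R (1,lam))) \<in> borel_measurable (lborel \<Otimes>\<^sub>M lborel)"
    by (intro prod_meas) (simp add: case_prod_beta)
  then have "(\<lambda>z. \<integral>r. indicator {0..q} r * S (z - r *\<^sub>R (1,lam)) \<partial>lborel) \<in> borel_measurable lborel"
    by (rule lborel.borel_measurable_lebesgue_integral)
  then show ?thesis unfolding J_def[abs_def] by simp
qed

lemma ind_int: "integrable lborel (\<lambda>r::real. c * (indicator {a..b} r :: real))"
  using emeasure_compact_finite[of "{a..b}"] by (intro integrable_mult_right integrable_real_indicator) auto

lemma J_bound:
  assumes "q \<ge> 0" shows "\<bar>J q z\<bar> \<le> B * q"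
proof -
  have m: "(\<lambda>r. indicator {0..q} r * S (z - r *\<^sub>R (1,lam))) \<in> borel_measurable lborel"
    using Sm by (intro borel_measurable_times) (auto intro!: meas_comp[OF Sm] continuous_intros)
  have bd: "\<bar>indicator {0..q} r * S (z - r *\<^sub>R (1,lam))\<bar> \<le> B * indicator {0..q} r" for r
    using Sb[of "z - r *\<^sub>R (1,lam)"] by (auto simp: indicator_def)
  have i: "integrable lborel (\<lambda>r. indicator {0..q} r * S (z - r *\<^sub>R (1,lam)))"
    by (rule Bochner_Integration.integrable_bound[OF ind_int[of B 0 q] m]) (use bd B0 in auto)
  have "\<bar>J q z\<bar> \<le> (\<integral>r. \<bar>indicator {0..q} r * S (z - r *\<^sub>R (1,lam))\<bar> \<partial>lborel)"
    unfolding J_def by (rule integral_abs_bound)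
  also have "\<dots> \<le> (\<integral>r. B * indicator {0..q} r \<partial>lborel)"
    using i bd ind_int[of B 0 q] by (intro integral_mono) auto
  also have "\<dots> = B * q" using assms by (simp only: integral_mult_right_zero Bochner_Integration.integral_indicator) simp
  finally show ?thesis .
qed

lemma fubJ:
  assumes c: "continuous_on UNIV \<psi>" and K: "compact K" and z: "\<And>z. z \<notin> K \<Longrightarrow> \<psi> z = 0"
    and b: "\<And>z. \<bar>\<psi> z\<bar> \<le> C" and q: "q \<ge> 0"
  shows "(\<integral>z. S z * avg q (1,lam) \<psi> z \<partial>lborel) = (\<integral>z. \<psi> z * J q z \<partial>lborel)"
proof -
  let ?v = "(1::real, lam)"
  have avgL: "avg q ?v \<psi> z = (\<integral>r. indicator {0..q} r * \<psi> (z + r *\<^sub>R ?v) \<partial>lborel)" for z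
  proof -
    have "continuous_on {0..q} (\<lambda>r. \<psi> (z + r *\<^sub>R ?v))"
      by (intro continuous_on_compose2[OF c]) (auto intro!: continuous_intros)
    from set_borel_integral_eq_integral(2)[OF borel_integrable_atLeastAtMost'[OF this]]
    show ?thesis by (simp add: avg_def set_lebesgue_integral_def)
  qed
  have C0: "C \<ge> 0" using b[of 0] by linarith
  have pm: "\<psi> \<in> borel_measurable borel" using c by (rule borel_measurable_continuous_onI)
  define Kq where "Kq = (\<lambda>p. fst p - snd p *\<^sub>R ?v) ` (K \<times> {0..q})"
  have Kq: "compact Kq" unfolding Kq_def
    by (intro compact_continuous_image compact_Times K compact_Icc) (auto intro!: continuous_intros)
  define F1 where "F1 z r = S z * (indicator {0..q} r * \<psi> (z + r *\<^sub>R ?v))" for z r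
  define F2 where "F2 z r = indicator {0..q} r * S (z - r *\<^sub>R ?v) * \<psi> z" for z r
  have ind_m: "(\<lambda>p::(real \<times> real) \<times> real. indicator {0..q} (snd p) :: real) \<in> borel_measurable borel"
    by (rule meas_comp[where g="indicator {0..q}"]) (auto intro: continuous_intros)
  have int1: "integrable (lborel \<Otimes>\<^sub>M lborel) (case_prod F1)"
    unfolding lborel_prod
  proof (rule bcs_integrable[where K="Kq \<times> {0..q}" and C="B*C"])
    show "case_prod F1 \<in> borel_measurable borel"
      unfolding F1_def case_prod_beta
      by (intro borel_measurable_times ind_m meas_comp[OF Sm] meas_comp[OF pm]) (auto intro!: continuous_intros)
    show "compact (Kq \<times> {0..q})" using Kq by (intro compact_Times) auto
    show "case_prod F1 p = 0" if "p \<notin> Kq \<times> {0..q}" for p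
    proof (rule ccontr)
      assume "case_prod F1 p \<noteq> 0"
      then have r: "snd p \<in> {0..q}" and nz: "\<psi> (fst p + snd p *\<^sub>R ?v) \<noteq> 0"
        by (auto simp: F1_def case_prod_beta indicator_def split: if_splits)
      have k: "fst p + snd p *\<^sub>R ?v \<in> K" using z nz by blast
      have "fst p \<in> Kq" unfolding Kq_def
        by (rule rev_image_eqI[of "(fst p + snd p *\<^sub>R ?v, snd p)"]) (use r k in auto)
      then show False using that r by (cases p) auto
    qed
    show "\<bar>case_prod F1 p\<bar> \<le> B * C" for p
      using Sb[of "fst p"] b[of "fst p + snd p *\<^sub>R ?v"] B0 C0
      by (auto simp: F1_def case_prod_beta indicator_def abs_mult intro: mult_mono)
  qed
  have int2: "integrable (lborel \<Otimes>\<^sub>M lborel) (case_prod F2)"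
    unfolding lborel_prod
  proof (rule bcs_integrable[where K="K \<times> {0..q}" and C="B*C"])
    show "case_prod F2 \<in> borel_measurable borel"
      unfolding F2_def case_prod_beta
      by (intro borel_measurable_times ind_m meas_comp[OF Sm] meas_comp[OF pm]) (auto intro!: continuous_intros)
    show "compact (K \<times> {0..q})" using K by (intro compact_Times) auto
    show "case_prod F2 p = 0" if "p \<notin> K \<times> {0..q}" for p
      using that z by (cases p) (auto simp: F2_def indicator_def)
    show "\<bar>case_prod F2 p\<bar> \<le> B * C" for p
      using Sb[of "fst p - snd p *\<^sub>R ?v"] b[of "fst p"] B0 C0
      by (auto simp: F2_def case_prod_beta indicator_def abs_mult intro: mult_mono)
  qed
  have "(\<integral>z. S z * avg q ?v \<psi> z \<partial>lborel) = (\<integral>z. \<integral>r. F1 z r \<partial>lborel \<partial>lborel)"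
    by (simp add: avgL F1_def)
  also have "\<dots> = (\<integral>r. \<integral>z. F1 z r \<partial>lborel \<partial>lborel)"
    by (rule lborel_pair.Fubini_integral[OF int1, symmetric])
  also have "\<dots> = (\<integral>r. \<integral>z. F2 z r \<partial>lborel \<partial>lborel)"
  proof (rule Bochner_Integration.integral_cong[OF refl])
    fix r
    have m: "(\<lambda>z. S z * \<psi> (z + r *\<^sub>R ?v)) \<in> borel_measurable borel"
      by (intro borel_measurable_times Sm meas_comp[OF pm]) (auto intro!: continuous_intros)
    have "(\<integral>z. F1 z r \<partial>lborel) = indicator {0..q} r * (\<integral>z. S z * \<psi> (z + r *\<^sub>R ?v) \<partial>lborel)"
      unfolding F1_def by (subst mult.left_commute) (rule integral_mult_right_zero)
    also have "(\<integral>z. S z * \<psi> (z + r *\<^sub>R ?v) \<partial>lborel) = (\<integral>z. S (z - r *\<^sub>R ?v) * \<psi> z \<partial>lborel)"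
      using integral_translate[OF m, of "- (r *\<^sub>R ?v)"]
      by (simp only: diff_conv_add_uminus[symmetric] diff_add_cancel)
    also have "indicator {0..q} r * (\<integral>z. S (z - r *\<^sub>R ?v) * \<psi> z \<partial>lborel) = (\<integral>z. F2 z r \<partial>lborel)"
      unfolding F2_def mult.assoc by (rule integral_mult_right_zero[symmetric])
    finally show "(\<integral>z. F1 z r \<partial>lborel) = (\<integral>z. F2 z r \<partial>lborel)" .
  qed
  also have "\<dots> = (\<integral>z. \<integral>r. F2 z r \<partial>lborel \<partial>lborel)"
    by (rule lborel_pair.Fubini_integral[OF int2])
  also have "\<dots> = (\<integral>z. \<psi> z * J q z \<partial>lborel)"
    by (simp add: F2_def J_def mult.commute)
  finally show ?thesis .
qed

lemma avg_zero_outside: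
  assumes z: "\<And>z. z \<notin> K \<Longrightarrow> \<psi> z = 0" and y: "y \<notin> (\<lambda>p. fst p - snd p *\<^sub>R v) ` (K \<times> {0..q})"
  shows "avg q v \<psi> y = 0"
proof -
  have "\<psi> (y + r *\<^sub>R v) = 0" if "r \<in> {0..q}" for r
  proof (rule z)
    show "y + r *\<^sub>R v \<notin> K"
    proof
      assume "y + r *\<^sub>R v \<in> K"
      then have "y \<in> (\<lambda>p. fst p - snd p *\<^sub>R v) ` (K \<times> {0..q})"
        by (intro rev_image_eqI[of "(y + r *\<^sub>R v, r)"]) (use that in auto)
      then show False using y by blast
    qed
  qed
  then have "avg q v \<psi> y = integral {0..q} (\<lambda>r. 0::real)"
    unfolding avg_def by (intro integral_cong) auto
  then show ?thesis by simp
qed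

lemma avg_bound:
  assumes c: "continuous_on UNIV \<psi>" and b: "\<And>z. \<bar>\<psi> z\<bar> \<le> C" and q: "q \<ge> 0"
  shows "\<bar>avg q v \<psi> y\<bar> \<le> C * q"
proof -
  have C0: "C \<ge> 0" using b[of 0] by linarith
  have i: "(\<lambda>r. \<psi> (y + r *\<^sub>R v)) integrable_on cbox 0 q"
    by (intro integrable_continuous continuous_on_compose2[OF c]) (auto intro!: continuous_intros)
  have "norm (integral (cbox 0 q) (\<lambda>r. \<psi> (y + r *\<^sub>R v))) \<le> C * Henstock_Kurzweil_Integration.content (cbox 0 q)"
    by (rule Henstock_Kurzweil_Integration.integrable_bound[OF C0 i]) (use b in auto)
  then show ?thesis using q by (simp add: avg_def)
qed

lemma identity:
  assumes \<psi>: "smooth2 \<psi>" and K: "compact K" and z: "\<And>z. z \<notin> K \<Longrightarrow> \<psi> z = 0"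
    and pos: "\<And>z. z \<in> K \<Longrightarrow> fst z > q" and q: "q > 0"
  shows "(\<integral>z. \<psi> z * (w (z - q *\<^sub>R (1,lam)) - w z + J q z) \<partial>lborel) = 0"
proof -
  let ?v = "(1::real, lam)"
  obtain \<psi>t \<psi>x where p: "partials \<psi> \<psi>t \<psi>x" using smooth2_has_partials[OF \<psi>] by blast
  have ct: "continuous_on UNIV \<psi>t" "continuous_on UNIV \<psi>x"
    using smooth2_partials[OF \<psi> p] smooth2_cont by auto
  have c\<psi>: "continuous_on UNIV \<psi>" using smooth2_cont \<psi> by blast
  have pm: "\<psi> \<in> borel_measurable borel" using c\<psi> by (rule borel_measurable_continuous_onI)
  obtain C where C: "C \<ge> 0" "\<And>z. \<bar>\<psi> z\<bar> \<le> C" using cs_bounded[OF c\<psi> K z] by blast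
  define Kq where "Kq = (\<lambda>p. fst p - snd p *\<^sub>R ?v) ` (K \<times> {0..q})"
  have Kq: "compact Kq" unfolding Kq_def
    by (intro compact_continuous_image compact_Times K compact_Icc) (auto intro!: continuous_intros)
  have Kq_pos: "fst y > 0" if "y \<in> Kq" for y
    using that pos unfolding Kq_def by force
  define chi where "chi = avg q ?v \<psi>"
  have chi0: "chi y = 0" if "y \<notin> Kq" for y
    unfolding chi_def by (rule avg_zero_outside[OF z]) (use that Kq_def in auto)
  have cs: "compact_support_in chi ({0<..} \<times> UNIV)"
    unfolding compact_support_in_def using Kq Kq_pos chi0 by (intro exI[of _ Kq]) auto
  have W: "(\<integral>z. w z * avg q ?v \<psi>t z + lam * w z * avg q ?v \<psi>x z + S z * chi z \<partial>lborel) = 0"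
    using weak[OF smooth2_avg[OF \<psi>] cs[unfolded chi_def] partials_avg[OF \<psi> p]] by (simp add: chi_def)
  have dir: "w z * avg q ?v \<psi>t z + lam * w z * avg q ?v \<psi>x z + S z * chi z
      = w z * \<psi> (z + q *\<^sub>R ?v) - w z * \<psi> z + S z * chi z" for z
  proof -
    have "w z * avg q ?v \<psi>t z + lam * w z * avg q ?v \<psi>x z = w z * (avg q ?v \<psi>t z + lam * avg q ?v \<psi>x z)"
      by (simp add: algebra_simps)
    also have "\<dots> = w z * (\<psi> (z + q *\<^sub>R ?v) - \<psi> z)"
      using avg_dir[OF p ct, of q lam z] q by simp
    finally show ?thesis by (simp add: algebra_simps)
  qed
  have cchi: "continuous_on UNIV chi" unfolding chi_def using smooth2_avg[OF \<psi>] smooth2_cont by blast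
  have chim: "chi \<in> borel_measurable borel" using cchi by (rule borel_measurable_continuous_onI)
  have chib: "\<bar>chi y\<bar> \<le> C * q" for y unfolding chi_def using avg_bound[OF c\<psi> C(2)] q by simp
  define Ks where "Ks = (\<lambda>k. k - q *\<^sub>R ?v) ` K"
  have Ks: "compact Ks" unfolding Ks_def
    by (intro compact_continuous_image K) (auto intro!: continuous_intros)
  have i1: "integrable lborel (\<lambda>z. w z * \<psi> (z + q *\<^sub>R ?v))"
  proof (rule bcs_integrable[OF _ Ks, of _ "B * C"])
    show "(\<lambda>z. w z * \<psi> (z + q *\<^sub>R ?v)) \<in> borel_measurable borel"
      by (intro borel_measurable_times wm meas_comp[OF pm]) (auto intro!: continuous_intros)
    show "w y * \<psi> (y + q *\<^sub>R ?v) = 0" if "y \<notin> Ks" for y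
    proof -
      have "y + q *\<^sub>R ?v \<notin> K"
      proof
        assume "y + q *\<^sub>R ?v \<in> K"
        then have "y \<in> Ks" unfolding Ks_def by (intro rev_image_eqI[of "y + q *\<^sub>R ?v"]) auto
        then show False using that by blast
      qed
      then show ?thesis using z by simp
    qed
    show "\<bar>w y * \<psi> (y + q *\<^sub>R ?v)\<bar> \<le> B * C" for y
      using wb[of y] C(2)[of "y + q *\<^sub>R ?v"] B0 C(1) by (simp add: abs_mult mult_mono)
  qed
  have i2: "integrable lborel (\<lambda>z. w z * \<psi> z)"
    by (rule bcs_integrable[OF _ K, of _ "B * C"])
      (use wm pm z wb C B0 in \<open>auto intro!: borel_measurable_times simp: abs_mult mult_mono\<close>)
  have i3: "integrable lborel (\<lambda>z. S z * chi z)"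
    by (rule bcs_integrable[OF _ Kq, of _ "B * (C * q)"])
      (use Sm chim chi0 Sb chib B0 in \<open>auto intro!: borel_measurable_times simp: abs_mult mult_mono\<close>)
  have i4: "integrable lborel (\<lambda>z. w (z - q *\<^sub>R ?v) * \<psi> z)"
  proof (rule bcs_integrable[OF _ K, of _ "B * C"])
    show "(\<lambda>z. w (z - q *\<^sub>R ?v) * \<psi> z) \<in> borel_measurable borel"
      by (intro borel_measurable_times pm meas_comp[OF wm]) (auto intro!: continuous_intros)
  qed (use z wb C B0 in \<open>auto simp: abs_mult mult_mono\<close>)
  have Jm: "J q \<in> borel_measurable borel" by (rule J_meas)
  have i5: "integrable lborel (\<lambda>z. \<psi> z * J q z)"
    by (rule bcs_integrable[OF _ K, of _ "C * (B * q)"])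
      (use pm Jm z J_bound[of q] q C B0 in \<open>auto intro!: borel_measurable_times simp: abs_mult mult_mono\<close>)
  have tr: "(\<integral>z. w z * \<psi> (z + q *\<^sub>R ?v) \<partial>lborel) = (\<integral>z. w (z - q *\<^sub>R ?v) * \<psi> z \<partial>lborel)"
  proof -
    have m: "(\<lambda>z. w z * \<psi> (z + q *\<^sub>R ?v)) \<in> borel_measurable borel"
      by (intro borel_measurable_times wm meas_comp[OF pm]) (auto intro!: continuous_intros)
    show ?thesis
      using integral_translate[OF m, of "- (q *\<^sub>R ?v)"]
      by (simp only: diff_conv_add_uminus[symmetric] diff_add_cancel)
  qed
  have fb: "(\<integral>z. S z * chi z \<partial>lborel) = (\<integral>z. \<psi> z * J q z \<partial>lborel)"
    unfolding chi_def using fubJ[OF c\<psi> K z C(2), of q] q by simp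
  have "0 = (\<integral>z. w z * \<psi> (z + q *\<^sub>R ?v) - w z * \<psi> z + S z * chi z \<partial>lborel)"
    using W dir by simp
  also have "\<dots> = (\<integral>z. w z * \<psi> (z + q *\<^sub>R ?v) \<partial>lborel) - (\<integral>z. w z * \<psi> z \<partial>lborel) + (\<integral>z. S z * chi z \<partial>lborel)"
    using i1 i2 i3 by simp
  also have "\<dots> = (\<integral>z. w (z - q *\<^sub>R ?v) * \<psi> z \<partial>lborel) - (\<integral>z. w z * \<psi> z \<partial>lborel) + (\<integral>z. \<psi> z * J q z \<partial>lborel)"
    using tr fb by simp
  also have "\<dots> = (\<integral>z. w (z - q *\<^sub>R ?v) * \<psi> z - w z * \<psi> z + \<psi> z * J q z \<partial>lborel)"
    using i4 i2 i5 by simp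
  also have "\<dots> = (\<integral>z. \<psi> z * (w (z - q *\<^sub>R ?v) - w z + J q z) \<partial>lborel)"
    by (simp add: algebra_simps)
  finally show ?thesis by simp
qed

end


context RS begin

lemma ae_F:
  assumes \<phi>: "smooth2 \<phi>" and K: "compact K" and z: "\<And>z. z \<notin> K \<Longrightarrow> \<phi> z = 0"
    and pos: "\<And>z. z \<in> K \<Longrightarrow> fst z > q" and q: "q > 0"
  shows "AE z in lborel. \<phi> z * (w (z - q *\<^sub>R (1,lam)) - w z + J q z) = 0"
proof -
  let ?v = "(1::real, lam)"
  have c\<phi>: "continuous_on UNIV \<phi>" using smooth2_cont \<phi> by blast
  have pm: "\<phi> \<in> borel_measurable borel" using c\<phi> by (rule borel_measurable_continuous_onI)
  obtain C where C: "C \<ge> 0" "\<And>z. \<bar>\<phi> z\<bar> \<le> C" using cs_bounded[OF c\<phi> K z] by blast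
  have Jm: "J q \<in> borel_measurable borel" by (rule J_meas)
  show ?thesis
  proof (rule fund_ae[OF _ K, of _ "C * (2 * B + B * q)"])
    show "(\<lambda>z. \<phi> z * (w (z - q *\<^sub>R ?v) - w z + J q z)) \<in> borel_measurable borel"
      by (intro borel_measurable_times borel_measurable_add borel_measurable_diff pm wm Jm meas_comp[OF wm])
        (auto intro!: continuous_intros)
    show "\<phi> y * (w (y - q *\<^sub>R ?v) - w y + J q y) = 0" if "y \<notin> K" for y using z that by simp
    show "\<bar>\<phi> y * (w (y - q *\<^sub>R ?v) - w y + J q y)\<bar> \<le> C * (2 * B + B * q)" for y
    proof -
      have "\<bar>w (y - q *\<^sub>R ?v) - w y + J q y\<bar> \<le> 2 * B + B * q"
        using wb[of y] wb[of "y - q *\<^sub>R ?v"] J_bound[of q y] q by linarith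
      then show ?thesis using C by (simp add: abs_mult mult_mono)
    qed
    show "(\<integral>y. \<phi> y * (w (y - q *\<^sub>R ?v) - w y + J q y) * p y \<partial>lborel) = 0"
      if "real_polynomial_function p" for p
    proof -
      have "smooth2 (\<lambda>y. \<phi> y * p y)" by (rule smooth2_mult[OF \<phi> smooth2_poly[OF that]])
      from identity[OF this K _ pos q] z
      have "(\<integral>y. \<phi> y * p y * (w (y - q *\<^sub>R ?v) - w y + J q y) \<partial>lborel) = 0" by simp
      then show ?thesis by (simp add: algebra_simps)
    qed
  qed
qed

lemma sgn_conv:
  fixes a b k :: real
  shows "\<bar>a - k\<bar> - \<bar>b - k\<bar> \<ge> sgn (b - k) * (a - b)"
  by (cases "b - k" rule: linorder_cases) (auto simp: sgn_if abs_if)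

lemma conv_ineq:
  assumes \<phi>: "smooth2 \<phi>" and K: "compact K" and z: "\<And>z. z \<notin> K \<Longrightarrow> \<phi> z = 0"
    and pos: "\<And>z. z \<in> K \<Longrightarrow> fst z > q" and q: "q > 0" and nn: "\<And>z. \<phi> z \<ge> 0"
  shows "(\<integral>z. \<bar>w z - k\<bar> * (\<phi> (z + q *\<^sub>R (1,lam)) - \<phi> z) \<partial>lborel)
       \<ge> - (\<integral>z. \<phi> z * sgn (w z - k) * J q z \<partial>lborel)"
proof -
  let ?v = "(1::real, lam)"
  have c\<phi>: "continuous_on UNIV \<phi>" using smooth2_cont \<phi> by blast
  have pm: "\<phi> \<in> borel_measurable borel" using c\<phi> by (rule borel_measurable_continuous_onI)
  obtain C where C: "C \<ge> 0" "\<And>z. \<bar>\<phi> z\<bar> \<le> C" using cs_bounded[OF c\<phi> K z] by blast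
  have Jm: "J q \<in> borel_measurable borel" by (rule J_meas)
  have Bk: "\<bar>w y - k\<bar> \<le> B + \<bar>k\<bar>" for y using wb[of y] by linarith
  have sm: "(\<lambda>y. sgn (w y - k)) \<in> borel_measurable borel" using wm by measurable
  define Ks where "Ks = (\<lambda>k. k - q *\<^sub>R ?v) ` K"
  have Ks: "compact Ks" unfolding Ks_def
    by (intro compact_continuous_image K) (auto intro!: continuous_intros)
  have zs: "\<phi> (y + q *\<^sub>R ?v) = 0" if "y \<notin> Ks" for y
  proof -
    have "y + q *\<^sub>R ?v \<notin> K"
    proof
      assume "y + q *\<^sub>R ?v \<in> K"
      then have "y \<in> Ks" unfolding Ks_def by (intro rev_image_eqI[of "y + q *\<^sub>R ?v"]) auto
      then show False using that by blast
    qed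
    then show ?thesis using z by simp
  qed
  have i1: "integrable lborel (\<lambda>y. \<phi> y * \<bar>w (y - q *\<^sub>R ?v) - k\<bar>)"
  proof (rule bcs_integrable[OF _ K, of _ "C * (B + \<bar>k\<bar>)"])
    show "(\<lambda>y. \<phi> y * \<bar>w (y - q *\<^sub>R ?v) - k\<bar>) \<in> borel_measurable borel"
      by (intro borel_measurable_times borel_measurable_abs borel_measurable_diff pm meas_comp[OF wm])
        (auto intro!: continuous_intros)
  qed (use z C Bk in \<open>auto simp: abs_mult mult_mono\<close>)
  have i2: "integrable lborel (\<lambda>y. \<phi> y * \<bar>w y - k\<bar>)"
    by (rule bcs_integrable[OF _ K, of _ "C * (B + \<bar>k\<bar>)"])
      (use z C Bk wm pm in \<open>auto simp: abs_mult mult_mono intro!: borel_measurable_times borel_measurable_abs borel_measurable_diff\<close>)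
  have i3: "integrable lborel (\<lambda>y. \<phi> (y + q *\<^sub>R ?v) * \<bar>w y - k\<bar>)"
  proof (rule bcs_integrable[OF _ Ks, of _ "C * (B + \<bar>k\<bar>)"])
    show "(\<lambda>y. \<phi> (y + q *\<^sub>R ?v) * \<bar>w y - k\<bar>) \<in> borel_measurable borel"
      by (intro borel_measurable_times borel_measurable_abs borel_measurable_diff wm meas_comp[OF pm])
        (auto intro!: continuous_intros)
  qed (use zs C Bk in \<open>auto simp: abs_mult mult_mono\<close>)
  have i4: "integrable lborel (\<lambda>y. \<phi> y * sgn (w y - k) * J q y)"
  proof (rule bcs_integrable[OF _ K, of _ "C * (B * q)"])
    show "(\<lambda>y. \<phi> y * sgn (w y - k) * J q y) \<in> borel_measurable borel"
      by (intro borel_measurable_times pm sm Jm)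
    show "\<bar>\<phi> y * sgn (w y - k) * J q y\<bar> \<le> C * (B * q)" for y
    proof -
      have "\<bar>sgn (w y - k)\<bar> \<le> (1::real)" by (simp add: abs_sgn_eq)
      then have "\<bar>sgn (w y - k) * J q y\<bar> \<le> B * q"
        using J_bound[of q y] q by (simp add: abs_mult) (metis abs_ge_zero mult_left_le_one_le order_trans)
      then show ?thesis using C by (simp add: abs_mult mult_mono mult.assoc)
    qed
  qed (use z in auto)
  have AE0: "AE y in lborel. \<phi> y * (w (y - q *\<^sub>R ?v) - w y + J q y) = 0"
    by (rule ae_F[OF \<phi> K]) (use z pos q in auto)
  have AE: "AE y in lborel. - (\<phi> y * sgn (w y - k) * J q y) \<le> \<phi> y * \<bar>w (y - q *\<^sub>R ?v) - k\<bar> - \<phi> y * \<bar>w y - k\<bar>"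
    using AE0
  proof (rule AE_mp, intro AE_I2 impI)
    fix y assume h: "\<phi> y * (w (y - q *\<^sub>R ?v) - w y + J q y) = 0"
    show "- (\<phi> y * sgn (w y - k) * J q y) \<le> \<phi> y * \<bar>w (y - q *\<^sub>R ?v) - k\<bar> - \<phi> y * \<bar>w y - k\<bar>"
    proof (cases "\<phi> y = 0")
      case True then show ?thesis by simp
    next
      case False
      then have e: "w (y - q *\<^sub>R ?v) - w y = - J q y" using h by simp
      have "sgn (w y - k) * (w (y - q *\<^sub>R ?v) - w y) \<le> \<bar>w (y - q *\<^sub>R ?v) - k\<bar> - \<bar>w y - k\<bar>"
        by (rule sgn_conv)
      then have "- (sgn (w y - k) * J q y) \<le> \<bar>w (y - q *\<^sub>R ?v) - k\<bar> - \<bar>w y - k\<bar>" using e by simp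
      from mult_left_mono[OF this nn[of y]]
      show ?thesis by (simp add: algebra_simps)
    qed
  qed
  have "- (\<integral>y. \<phi> y * sgn (w y - k) * J q y \<partial>lborel) = (\<integral>y. - (\<phi> y * sgn (w y - k) * J q y) \<partial>lborel)"
    by simp
  also have "\<dots> \<le> (\<integral>y. \<phi> y * \<bar>w (y - q *\<^sub>R ?v) - k\<bar> - \<phi> y * \<bar>w y - k\<bar> \<partial>lborel)"
    using i1 i2 i4 AE by (intro integral_mono_AE) auto
  also have "\<dots> = (\<integral>y. \<phi> y * \<bar>w (y - q *\<^sub>R ?v) - k\<bar> \<partial>lborel) - (\<integral>y. \<phi> y * \<bar>w y - k\<bar> \<partial>lborel)"
    using i1 i2 by simp
  also have "(\<integral>y. \<phi> y * \<bar>w (y - q *\<^sub>R ?v) - k\<bar> \<partial>lborel) = (\<integral>y. \<phi> (y + q *\<^sub>R ?v) * \<bar>w y - k\<bar> \<partial>lborel)"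
  proof -
    have m: "(\<lambda>y. \<phi> (y + q *\<^sub>R ?v) * \<bar>w y - k\<bar>) \<in> borel_measurable borel"
      by (intro borel_measurable_times borel_measurable_abs borel_measurable_diff wm meas_comp[OF pm])
        (auto intro!: continuous_intros)
    show ?thesis
      using integral_translate[OF m, of "- (q *\<^sub>R ?v)"]
      by (simp only: diff_conv_add_uminus[symmetric] diff_add_cancel)
  qed
  also have "(\<integral>y. \<phi> (y + q *\<^sub>R ?v) * \<bar>w y - k\<bar> \<partial>lborel) - (\<integral>y. \<phi> y * \<bar>w y - k\<bar> \<partial>lborel)
     = (\<integral>y. \<bar>w y - k\<bar> * (\<phi> (y + q *\<^sub>R ?v) - \<phi> y) \<partial>lborel)"
    using i3 i2 by (simp add: algebra_simps)
  finally show ?thesis .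
qed

end


lemma lebdiff_1d:
  fixes f :: "real \<Rightarrow> real"
  assumes m: "f \<in> borel_measurable borel" and b: "\<And>x. \<bar>f x\<bar> \<le> Cf"
  obtains N where "negligible N"
    "\<And>x e. x \<notin> N \<Longrightarrow> e > 0 \<Longrightarrow> \<exists>d>0. \<forall>h. 0 < h \<and> h < d \<longrightarrow>
        \<bar>(\<integral>r. indicator {0..h} r * f (x + r) \<partial>lborel) / h - f x\<bar> < e"
proof -
  have Cf0: "Cf \<ge> 0" using b[of 0] by linarith
  have si: "set_integrable lborel {a..c} f" for a c
    unfolding set_integrable_def
    by (rule bcs_integrable[of _ "{a..c}" Cf]) (use m b Cf0 in \<open>auto simp: indicator_def\<close>)
  have hk: "f integrable_on cbox a c" for a c
    using set_borel_integral_eq_integral(1)[OF si, of a c] by simp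
  obtain N where N: "negligible N"
    "\<And>x e. \<lbrakk>x \<notin> N; 0 < e\<rbrakk> \<Longrightarrow> \<exists>d>0. \<forall>h. 0 < h \<and> h < d \<longrightarrow>
        norm (integral (cbox x (x + h *\<^sub>R One)) f /\<^sub>R h ^ DIM(real) - f x) < e"
    using integrable_ccontinuous_explicit[OF hk] by blast
  have conv: "integral (cbox x (x + h *\<^sub>R One)) f = (\<integral>r. indicator {0..h} r * f (x + r) \<partial>lborel)" for x h :: real
  proof -
    have "integral (cbox x (x + h *\<^sub>R One)) f = integral {x..x+h} f" by simp
    also have "\<dots> = (LINT \<rho>:{x..x+h}|lborel. f \<rho>)"
      by (rule set_borel_integral_eq_integral(2)[OF si, symmetric])
    also have "\<dots> = (\<integral>\<rho>. indicator {x..x+h} \<rho> * f \<rho> \<partial>lborel)"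
      by (simp add: set_lebesgue_integral_def)
    also have "\<dots> = (\<integral>r. indicator {x..x+h} (x + r) * f (x + r) \<partial>lborel)"
      using lborel_integral_real_affine[of 1 "\<lambda>\<rho>. indicator {x..x+h} \<rho> * f \<rho>" x] by simp
    also have "\<dots> = (\<integral>r. indicator {0..h} r * f (x + r) \<partial>lborel)"
      by (intro Bochner_Integration.integral_cong) (auto simp: indicator_def)
    finally show ?thesis .
  qed
  show ?thesis
  proof (rule that[OF N(1)])
    fix x e :: real assume "x \<notin> N" "e > 0"
    from N(2)[OF this] obtain d where "d > 0" and d: "\<forall>h. 0 < h \<and> h < d \<longrightarrow>
        norm (integral (cbox x (x + h *\<^sub>R One)) f /\<^sub>R h ^ DIM(real) - f x) < e" by blast
    show "\<exists>d>0. \<forall>h. 0 < h \<and> h < d \<longrightarrow> \<bar>(\<integral>r. indicator {0..h} r * f (x + r) \<partial>lborel) / h - f x\<bar> < e"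
    proof (intro exI[of _ d] conjI allI impI)
      fix h :: real assume h: "0 < h \<and> h < d"
      have "norm (integral (cbox x (x + h *\<^sub>R One)) f /\<^sub>R h ^ DIM(real) - f x) < e" using d h by blast
      then show "\<bar>(\<integral>r. indicator {0..h} r * f (x + r) \<partial>lborel) / h - f x\<bar> < e"
        unfolding conv by (simp add: divide_inverse mult.commute)
    qed (rule \<open>d > 0\<close>)
  qed
qed

lemma negligible_AE_reflect:
  assumes "negligible (N :: real set)"
  shows "AE t in lborel. - t \<notin> N"
proof -
  have "negligible (uminus ` N :: real set)"
    by (rule negligible_differentiable_image_negligible[OF _ assms]) (auto intro!: derivative_intros)
  then have "uminus ` N \<in> null_sets lebesgue" by (simp add: negligible_iff_null_sets)
  then have "AE t in lebesgue. t \<notin> uminus ` N" by (rule AE_not_in)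
  then have "AE t in lebesgue. - t \<notin> N"
    by (rule AE_mp) (rule AE_I2, metis minus_minus rev_image_eqI)
  then show ?thesis by (simp add: AE_completion_iff)
qed

lemma shear_bcs:
  fixes G :: "real \<times> real \<Rightarrow> real"
  assumes m: "G \<in> borel_measurable borel" and K: "compact K" and z: "\<And>p. p \<notin> K \<Longrightarrow> G p = 0"
    and b: "\<And>p. \<bar>G p\<bar> \<le> C"
  shows "integral\<^sup>L lborel G = (\<integral>y. \<integral>t. G (t, y + lam * t) \<partial>lborel \<partial>lborel)"
proof (rule shear[OF m])
  show "integrable lborel G" by (rule bcs_integrable[OF m K z b])
  define KT where "KT = (\<lambda>p. (fst p, snd p - lam * fst p)) ` K"
  have KT: "compact KT" unfolding KT_def by (intro compact_continuous_image K) (auto intro!: continuous_intros)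
  show "integrable lborel (\<lambda>(t, y). G (t, y + lam * t))"
  proof (rule bcs_integrable[OF _ KT, of _ C])
    show "(\<lambda>(t, y). G (t, y + lam * t)) \<in> borel_measurable borel"
      unfolding case_prod_beta by (rule meas_comp[OF m]) (auto intro!: continuous_intros)
    show "(case p of (t, y) \<Rightarrow> G (t, y + lam * t)) = 0" if "p \<notin> KT" for p
    proof (cases p)
      case (Pair t y)
      have "(t, y + lam * t) \<notin> K"
      proof
        assume "(t, y + lam * t) \<in> K"
        then have "(t, y) \<in> KT" unfolding KT_def by (intro rev_image_eqI[of "(t, y + lam * t)"]) auto
        then show False using that Pair by simp
      qed
      then show ?thesis using z Pair by simp
    qed
  qed (use b in \<open>auto simp: case_prod_beta\<close>)
qed

context RS begin

lemma rhs_lim: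
  fixes Q :: "real \<times> real \<Rightarrow> real" and q :: "nat \<Rightarrow> real"
  assumes Qm: "Q \<in> borel_measurable borel" and Qb: "\<And>z. \<bar>Q z\<bar> \<le> CQ" and K: "compact K"
    and Qz: "\<And>z. z \<notin> K \<Longrightarrow> Q z = 0" and qpos: "\<And>n. q n > 0" and qlim: "q \<longlonglongrightarrow> 0"
  shows "(\<lambda>n. \<integral>z. Q z * J (q n) z / q n \<partial>lborel) \<longlonglongrightarrow> (\<integral>z. Q z * S z \<partial>lborel)"
proof -
  have CQ0: "CQ \<ge> 0" using Qb[of 0] by linarith
  obtain a where Ka: "K \<subseteq> cbox (-a) a"
    using bounded_subset_cbox_symmetric[OF compact_imp_bounded[OF K]] by blast
  define R1 where "R1 = \<bar>fst a\<bar>"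
  define R2 where "R2 = \<bar>snd a\<bar>"
  define Ry where "Ry = R2 + \<bar>lam\<bar> * R1"
  have Kbox: "\<bar>fst z\<bar> \<le> R1 \<and> \<bar>snd z\<bar> \<le> R2" if "z \<in> K" for z
  proof -
    have "z \<in> cbox (-a) a" using that Ka by blast
    then have "fst z \<in> {- fst a..fst a} \<and> snd z \<in> {- snd a..snd a}"
      by (simp add: cbox_prod[of "-a" a] mem_Times_iff)
    then show ?thesis unfolding R1_def R2_def by auto
  qed
  have R1: "R1 \<ge> 0" unfolding R1_def by simp
  define g where "g n z = Q z * J (q n) z / q n" for n z
  define g0 where "g0 z = Q z * S z" for z
  have gm: "g n \<in> borel_measurable borel" for n
    unfolding g_def[abs_def] using Qm J_meas[of "q n"] by measurable
  have g0m: "g0 \<in> borel_measurable borel" unfolding g0_def[abs_def] using Qm Sm by measurable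
  have gb: "\<bar>g n z\<bar> \<le> CQ * B" for n z
  proof -
    have "\<bar>J (q n) z\<bar> / q n \<le> B" using J_bound[of "q n" z] qpos[of n] by (simp add: divide_le_eq)
    then have "\<bar>J (q n) z / q n\<bar> \<le> B" using qpos[of n] by simp
    then show ?thesis unfolding g_def using Qb[of z] CQ0 by (simp add: abs_mult mult_mono times_divide_eq_right[symmetric] del: times_divide_eq_right)
  qed
  have g0b: "\<bar>g0 z\<bar> \<le> CQ * B" for z
    unfolding g0_def using Qb[of z] Sb[of z] CQ0 by (simp add: abs_mult mult_mono)
  have gz: "g n z = 0" if "z \<notin> K" for n z unfolding g_def using Qz[OF that] by simp
  have g0z: "g0 z = 0" if "z \<notin> K" for z unfolding g0_def using Qz[OF that] by simp
  have outside: "(t, y + lam * t) \<notin> K" if "\<bar>t\<bar> > R1 \<or> \<bar>y\<bar> > Ry" for t y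
  proof
    assume "(t, y + lam * t) \<in> K"
    from Kbox[OF this] have "\<bar>t\<bar> \<le> R1" "\<bar>y + lam * t\<bar> \<le> R2" by auto
    moreover have "\<bar>lam * t\<bar> \<le> \<bar>lam\<bar> * R1" using \<open>\<bar>t\<bar> \<le> R1\<close> by (simp add: abs_mult mult_left_mono)
    ultimately have "\<bar>y\<bar> \<le> Ry" unfolding Ry_def by linarith
    then show False using that \<open>\<bar>t\<bar> \<le> R1\<close> by linarith
  qed
  define I where "I n y = (\<integral>t. g n (t, y + lam * t) \<partial>lborel)" for n y
  define I0 where "I0 y = (\<integral>t. g0 (t, y + lam * t) \<partial>lborel)" for y
  have eqn: "(\<integral>z. Q z * J (q n) z / q n \<partial>lborel) = (\<integral>y. I n y \<partial>lborel)" for n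
    unfolding I_def using shear_bcs[OF gm K gz gb] by (simp add: g_def[abs_def])
  have eq0: "(\<integral>z. Q z * S z \<partial>lborel) = (\<integral>y. I0 y \<partial>lborel)"
    unfolding I0_def using shear_bcs[OF g0m K g0z g0b] by (simp add: g0_def[abs_def])
  have mT: "(\<lambda>t. G (t, y + lam * t)) \<in> borel_measurable lborel" if "G \<in> borel_measurable borel" for G :: "real \<times> real \<Rightarrow> real" and y
  proof -
    have "(\<lambda>t. G (t, y + lam * t)) \<in> borel_measurable borel"
      by (rule meas_comp[OF that]) (auto intro!: continuous_intros)
    then show ?thesis by simp
  qed
  have mI: "(\<lambda>y. \<integral>t. G (t, y + lam * t) \<partial>lborel) \<in> borel_measurable lborel" if "G \<in> borel_measurable borel" for G :: "real \<times> real \<Rightarrow> real"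
  proof -
    have "(\<lambda>p::real \<times> real. G (snd p, fst p + lam * snd p)) \<in> borel_measurable borel"
      by (rule meas_comp[OF that]) (auto intro!: continuous_intros)
    then have "(\<lambda>(y, t). G (t, y + lam * t)) \<in> borel_measurable (lborel \<Otimes>\<^sub>M lborel)"
      by (intro prod_meas) (simp add: case_prod_beta)
    then show ?thesis by (rule lborel.borel_measurable_lebesgue_integral)
  qed
  have wint: "integrable lborel (\<lambda>t::real. CQ * B * indicator {-R1..R1} t)"
    by (rule ind_int)
  have inner_bound: "\<bar>G (t, y + lam * t)\<bar> \<le> CQ * B * indicator {-R1..R1} t"
    if "\<And>z. \<bar>G z\<bar> \<le> CQ * B" "\<And>z. z \<notin> K \<Longrightarrow> G z = 0" for G :: "real \<times> real \<Rightarrow> real" and t y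
  proof (cases "\<bar>t\<bar> \<le> R1")
    case True then show ?thesis using that(1)[of "(t, y + lam * t)"] by (auto simp: indicator_def)
  next
    case False
    then have "t \<notin> {-R1..R1}" by auto
    then show ?thesis using that(2)[OF outside] False by simp
  qed
  have Ibound: "\<bar>\<integral>t. G (t, y + lam * t) \<partial>lborel\<bar> \<le> CQ * B * (2 * R1) * indicator {-Ry..Ry} y"
    if "G \<in> borel_measurable borel" "\<And>z. \<bar>G z\<bar> \<le> CQ * B" "\<And>z. z \<notin> K \<Longrightarrow> G z = 0" for G :: "real \<times> real \<Rightarrow> real" and y
  proof (cases "\<bar>y\<bar> \<le> Ry")
    case True
    have int: "integrable lborel (\<lambda>t. G (t, y + lam * t))"
      by (rule Bochner_Integration.integrable_bound[OF wint mT[OF that(1)]])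
        (use inner_bound[of G, OF that(2) that(3)] R1 CQ0 B0 in \<open>auto intro!: AE_I2 simp: abs_mult\<close>)
    have "\<bar>\<integral>t. G (t, y + lam * t) \<partial>lborel\<bar> \<le> (\<integral>t. \<bar>G (t, y + lam * t)\<bar> \<partial>lborel)"
      by (rule integral_abs_bound)
    also have "\<dots> \<le> (\<integral>t. CQ * B * indicator {-R1..R1} t \<partial>lborel)"
      using int wint inner_bound[of G, OF that(2) that(3)] by (intro integral_mono) auto
    also have "\<dots> = CQ * B * (2 * R1)" using R1 by (simp only: integral_mult_right_zero Bochner_Integration.integral_indicator) simp
    finally have "\<bar>\<integral>t. G (t, y + lam * t) \<partial>lborel\<bar> \<le> CQ * B * (2 * R1)" .
    moreover have "y \<in> {-Ry..Ry}" using True by auto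
    ultimately show ?thesis by simp
  next
    case False
    then have "G (t, y + lam * t) = 0" for t using that(3)[OF outside] by auto
    moreover have "y \<notin> {-Ry..Ry}" using False by auto
    ultimately show ?thesis by simp
  qed
  have inner: "(\<lambda>n. I n y) \<longlonglongrightarrow> I0 y" for y
  proof -
    define fy where "fy \<rho> = S (- \<rho>, y + lam * (- \<rho>))" for \<rho>
    have fym: "fy \<in> borel_measurable borel"
      unfolding fy_def[abs_def] by (rule meas_comp[OF Sm]) (auto intro!: continuous_intros)
    obtain N where N: "negligible N"
      "\<And>x e. x \<notin> N \<Longrightarrow> e > 0 \<Longrightarrow> \<exists>d>0. \<forall>h. 0 < h \<and> h < d \<longrightarrow>
        \<bar>(\<integral>r. indicator {0..h} r * fy (x + r) \<partial>lborel) / h - fy x\<bar> < e"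
      using lebdiff_1d[OF fym, of B] Sb unfolding fy_def by blast
    have Jeq: "J h (t, y + lam * t) = (\<integral>r. indicator {0..h} r * fy (- t + r) \<partial>lborel)" for h t
      unfolding J_def fy_def by (intro Bochner_Integration.integral_cong) (auto simp: algebra_simps)
    have pt: "(\<lambda>n. g n (t, y + lam * t)) \<longlonglongrightarrow> g0 (t, y + lam * t)" if tN: "- t \<notin> N" for t
    proof -
      have "(\<lambda>n. J (q n) (t, y + lam * t) / q n) \<longlonglongrightarrow> S (t, y + lam * t)"
      proof (rule LIMSEQ_I)
        fix e :: real assume "e > 0"
        obtain d where "d > 0" and d: "\<And>h. 0 < h \<Longrightarrow> h < d \<Longrightarrow>
            \<bar>(\<integral>r. indicator {0..h} r * fy (- t + r) \<partial>lborel) / h - fy (- t)\<bar> < e"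
          using N(2)[OF tN \<open>e > 0\<close>] by blast
        obtain M where M: "\<And>n. n \<ge> M \<Longrightarrow> norm (q n - 0) < d"
          using LIMSEQ_D[OF qlim \<open>d > 0\<close>] by blast
        show "\<exists>M. \<forall>n\<ge>M. norm (J (q n) (t, y + lam * t) / q n - S (t, y + lam * t)) < e"
        proof (intro exI allI impI)
          fix n assume "n \<ge> M"
          then have "q n < d" using M[of n] qpos[of n] by simp
          from d[OF qpos this] show "norm (J (q n) (t, y + lam * t) / q n - S (t, y + lam * t)) < e"
            by (simp add: Jeq fy_def)
        qed
      qed
      then have "(\<lambda>n. Q (t, y + lam * t) * (J (q n) (t, y + lam * t) / q n)) \<longlonglongrightarrow> Q (t, y + lam * t) * S (t, y + lam * t)"
        by (rule tendsto_mult_left)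
      then show ?thesis by (simp add: g_def g0_def)
    qed
    show ?thesis
      unfolding I_def I0_def
    proof (rule integral_dominated_convergence[where w="\<lambda>t. CQ * B * indicator {-R1..R1} t"])
      show "(\<lambda>t. g0 (t, y + lam * t)) \<in> borel_measurable lborel" by (rule mT[OF g0m])
      show "(\<lambda>t. g n (t, y + lam * t)) \<in> borel_measurable lborel" for n by (rule mT[OF gm])
      show "integrable lborel (\<lambda>t. CQ * B * indicator {-R1..R1} t)" by (rule wint)
      show "AE t in lborel. (\<lambda>n. g n (t, y + lam * t)) \<longlonglongrightarrow> g0 (t, y + lam * t)"
        using negligible_AE_reflect[OF N(1)] by (rule AE_mp) (auto intro!: AE_I2 pt)
      show "AE t in lborel. norm (g n (t, y + lam * t)) \<le> CQ * B * indicator {-R1..R1} t" for n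
        using inner_bound[of "g n"] gb gz by (auto intro!: AE_I2)
    qed
  qed
  have "(\<lambda>n. \<integral>y. I n y \<partial>lborel) \<longlonglongrightarrow> (\<integral>y. I0 y \<partial>lborel)"
  proof (rule integral_dominated_convergence[where w="\<lambda>y. CQ * B * (2 * R1) * indicator {-Ry..Ry} y"])
    show "I0 \<in> borel_measurable lborel" unfolding I0_def[abs_def] by (rule mI[OF g0m])
    show "I n \<in> borel_measurable lborel" for n unfolding I_def[abs_def] by (rule mI[OF gm])
    show "integrable lborel (\<lambda>y. CQ * B * (2 * R1) * indicator {-Ry..Ry} y)" by (rule ind_int)
    show "AE y in lborel. (\<lambda>n. I n y) \<longlonglongrightarrow> I0 y" by (intro AE_I2 inner)
    show "AE y in lborel. norm (I n y) \<le> CQ * B * (2 * R1) * indicator {-Ry..Ry} y" for n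
      unfolding I_def using Ibound[OF gm gb gz] by (auto intro!: AE_I2)
  qed
  then show ?thesis using eqn eq0 by simp
qed

end


context RS begin

lemma lhs_lim:
  assumes \<phi>: "smooth2 \<phi>" and p: "partials \<phi> \<phi>t \<phi>x" and K: "compact K" and z: "\<And>z. z \<notin> K \<Longrightarrow> \<phi> z = 0"
    and qpos: "\<And>n. q n > 0" and q1: "\<And>n. q n \<le> 1" and qlim: "q \<longlonglongrightarrow> 0"
  shows "(\<lambda>n. \<integral>z. \<bar>w z - k\<bar> * (\<phi> (z + q n *\<^sub>R (1,lam)) - \<phi> z) / q n \<partial>lborel)
     \<longlonglongrightarrow> (\<integral>z. \<bar>w z - k\<bar> * (\<phi>t z + lam * \<phi>x z) \<partial>lborel)"
proof -
  let ?v = "(1::real, lam)"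
  have c\<phi>: "continuous_on UNIV \<phi>" using smooth2_cont \<phi> by blast
  have ct: "continuous_on UNIV \<phi>t" "continuous_on UNIV \<phi>x"
    using smooth2_partials[OF \<phi> p] smooth2_cont by auto
  have pm: "\<phi> \<in> borel_measurable borel" using c\<phi> by (rule borel_measurable_continuous_onI)
  have ptm: "\<phi>t \<in> borel_measurable borel" "\<phi>x \<in> borel_measurable borel"
    using ct by (auto intro: borel_measurable_continuous_onI)
  have Kc: "closed K" using K compact_imp_closed by blast
  have zt: "\<phi>t y = 0" "\<phi>x y = 0" if "y \<notin> K" for y using partials_zero[OF p Kc z that] by auto
  obtain Ct where Ct: "Ct \<ge> 0" "\<And>y. \<bar>\<phi>t y\<bar> \<le> Ct" using cs_bounded[OF ct(1) K zt(1)] by blast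
  obtain Cx where Cx: "Cx \<ge> 0" "\<And>y. \<bar>\<phi>x y\<bar> \<le> Cx" using cs_bounded[OF ct(2) K zt(2)] by blast
  define K1 where "K1 = (\<lambda>p. fst p - snd p *\<^sub>R ?v) ` (K \<times> {0..1})"
  have K1: "compact K1" unfolding K1_def
    by (intro compact_continuous_image compact_Times K compact_Icc) (auto intro!: continuous_intros)
  have Bk: "\<bar>w y - k\<bar> \<le> B + \<bar>k\<bar>" for y using wb[of y] by linarith
  define D where "D = Ct + \<bar>lam\<bar> * Cx"
  have D0: "D \<ge> 0" unfolding D_def using Ct Cx by simp
  have diffb: "\<bar>(\<phi> (y + r *\<^sub>R ?v) - \<phi> y) / r\<bar> \<le> D" if "r > 0" for y r
  proof -
    have "\<phi> (y + r *\<^sub>R ?v) - \<phi> y = avg r ?v \<phi>t y + lam * avg r ?v \<phi>x y"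
      using avg_dir[OF p ct, of r lam y] that by simp
    moreover have "\<bar>avg r ?v \<phi>t y\<bar> \<le> Ct * r" by (rule avg_bound[OF ct(1) Ct(2)]) (use that in simp)
    moreover have "\<bar>avg r ?v \<phi>x y\<bar> \<le> Cx * r" by (rule avg_bound[OF ct(2) Cx(2)]) (use that in simp)
    ultimately have "\<bar>\<phi> (y + r *\<^sub>R ?v) - \<phi> y\<bar> \<le> \<bar>avg r ?v \<phi>t y\<bar> + \<bar>lam\<bar> * \<bar>avg r ?v \<phi>x y\<bar>"
      by (simp add: abs_mult[symmetric] abs_triangle_ineq)
    also have "\<dots> \<le> Ct * r + \<bar>lam\<bar> * (Cx * r)"
      using \<open>\<bar>avg r ?v \<phi>t y\<bar> \<le> Ct * r\<close> \<open>\<bar>avg r ?v \<phi>x y\<bar> \<le> Cx * r\<close>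
      by (intro add_mono mult_left_mono) auto
    finally have "\<bar>\<phi> (y + r *\<^sub>R ?v) - \<phi> y\<bar> \<le> Ct * r + \<bar>lam\<bar> * (Cx * r)" .
    then have "\<bar>\<phi> (y + r *\<^sub>R ?v) - \<phi> y\<bar> \<le> D * r" unfolding D_def by (simp add: algebra_simps)
    then show ?thesis using that by (simp add: divide_le_eq)
  qed
  have diffz: "\<phi> (y + r *\<^sub>R ?v) - \<phi> y = 0" if "y \<notin> K1" "0 \<le> r" "r \<le> 1" for y r
  proof -
    have "y \<notin> K"
    proof
      assume "y \<in> K"
      then have "y \<in> K1" unfolding K1_def by (intro rev_image_eqI[of "(y, 0)"]) (auto simp: zero_prod_def)
      then show False using that by blast
    qed
    moreover have "y + r *\<^sub>R ?v \<notin> K"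
    proof
      assume "y + r *\<^sub>R ?v \<in> K"
      then have "y \<in> K1" unfolding K1_def by (intro rev_image_eqI[of "(y + r *\<^sub>R ?v, r)"]) (use that in auto)
      then show False using that by blast
    qed
    ultimately show ?thesis using z by simp
  qed
  have pt: "(\<lambda>n. (\<phi> (y + q n *\<^sub>R ?v) - \<phi> y) / q n) \<longlonglongrightarrow> \<phi>t y + lam * \<phi>x y" for y
  proof -
    have "((\<lambda>r. y + r *\<^sub>R ?v) has_derivative (\<lambda>h. h *\<^sub>R ?v)) (at 0)"
      by (auto intro!: derivative_eq_intros)
    moreover have "(\<phi> has_derivative (\<lambda>(s, ya). s * \<phi>t y + ya * \<phi>x y)) (at (y + 0 *\<^sub>R ?v))"
      using partialsD[OF p, of y] by (simp only: scale_zero_left add_0_right)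
    ultimately have "((\<lambda>r. \<phi> (y + r *\<^sub>R ?v)) has_derivative (\<lambda>h. (\<lambda>(s, ya). s * \<phi>t y + ya * \<phi>x y) (h *\<^sub>R ?v))) (at 0)"
      by (rule has_derivative_compose)
    then have "((\<lambda>r. \<phi> (y + r *\<^sub>R ?v)) has_field_derivative (\<phi>t y + lam * \<phi>x y)) (at 0)"
      unfolding has_field_derivative_def
      by (rule has_derivative_eq_rhs) (auto simp: fun_eq_iff algebra_simps)
    then have L: "((\<lambda>r. (\<phi> (y + r *\<^sub>R ?v) - \<phi> y) / r) \<longlongrightarrow> \<phi>t y + lam * \<phi>x y) (at 0)"
      unfolding has_field_derivative_iff by (simp add: zero_prod_def[symmetric])
    have "filterlim q (at 0) sequentially"
      by (rule filterlim_atI[OF qlim]) (use qpos in \<open>auto intro!: always_eventually simp: less_imp_neq[symmetric]\<close>)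
    from filterlim_compose[OF L this] show ?thesis .
  qed
  show ?thesis
  proof (rule integral_dominated_convergence[where w="\<lambda>y. (B + \<bar>k\<bar>) * D * indicator K1 y"])
    show "(\<lambda>y. \<bar>w y - k\<bar> * (\<phi>t y + lam * \<phi>x y)) \<in> borel_measurable lborel"
      using wm ptm by measurable
    show "(\<lambda>y. \<bar>w y - k\<bar> * (\<phi> (y + q n *\<^sub>R ?v) - \<phi> y) / q n) \<in> borel_measurable lborel" for n
    proof -
      have "(\<lambda>y. \<phi> (y + q n *\<^sub>R ?v)) \<in> borel_measurable borel"
        by (rule meas_comp[OF pm]) (auto intro!: continuous_intros)
      then show ?thesis using wm pm by measurable
    qed
    show "integrable lborel (\<lambda>y. (B + \<bar>k\<bar>) * D * indicator K1 y)"
      using emeasure_compact_finite[OF K1] K1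
      by (intro integrable_mult_right integrable_real_indicator) (auto intro: borel_compact)
    show "AE y in lborel. (\<lambda>n. \<bar>w y - k\<bar> * (\<phi> (y + q n *\<^sub>R ?v) - \<phi> y) / q n) \<longlonglongrightarrow> \<bar>w y - k\<bar> * (\<phi>t y + lam * \<phi>x y)"
      using pt by (auto intro!: AE_I2 tendsto_mult_left simp: times_divide_eq_right[symmetric] simp del: times_divide_eq_right)
    show "AE y in lborel. norm (\<bar>w y - k\<bar> * (\<phi> (y + q n *\<^sub>R ?v) - \<phi> y) / q n) \<le> (B + \<bar>k\<bar>) * D * indicator K1 y" for n
    proof (intro AE_I2)
      fix y
      show "norm (\<bar>w y - k\<bar> * (\<phi> (y + q n *\<^sub>R ?v) - \<phi> y) / q n) \<le> (B + \<bar>k\<bar>) * D * indicator K1 y"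
      proof (cases "y \<in> K1")
        case True
        have "\<bar>\<bar>w y - k\<bar> * ((\<phi> (y + q n *\<^sub>R ?v) - \<phi> y) / q n)\<bar> \<le> (B + \<bar>k\<bar>) * D"
          unfolding abs_mult using Bk[of y] diffb[OF qpos[of n], of y] D0 by (intro mult_mono) auto
        then show ?thesis using True by (simp add: times_divide_eq_right[symmetric] del: times_divide_eq_right)
      next
        case False
        then show ?thesis using diffz[OF False, of "q n"] qpos[of n] q1[of n] by simp
      qed
    qed
  qed
qed

end


context RS begin

lemma renorm:
  assumes \<phi>: "smooth2 \<phi>" and cs: "compact_support_in \<phi> ({0<..} \<times> UNIV)" and p: "partials \<phi> \<phi>t \<phi>x"
    and nn: "\<And>z. \<phi> z \<ge> 0"
  shows "(\<integral>z. \<bar>w z - k\<bar> * (\<phi>t z + lam * \<phi>x z) + sgn (w z - k) * S z * \<phi> z \<partial>lborel) \<ge> 0"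
proof -
  obtain K where K: "compact K" "K \<subseteq> {0<..} \<times> UNIV" "\<And>z. z \<notin> K \<Longrightarrow> \<phi> z = 0"
    using cs unfolding compact_support_in_def by blast
  obtain \<delta> where \<delta>: "\<delta> > 0" "\<delta> \<le> 1" "\<And>z. z \<in> K \<Longrightarrow> fst z > \<delta>"
  proof (cases "K = {}")
    case True then show ?thesis using that[of 1] by auto
  next
    case False
    have "continuous_on K fst" by (intro continuous_intros)
    from continuous_attains_inf[OF K(1) False this]
    obtain x0 where x0: "x0 \<in> K" "\<And>y. y \<in> K \<Longrightarrow> fst x0 \<le> fst y" by blast
    have "fst x0 > 0" using x0(1) K(2) by auto
    show ?thesis
    proof (rule that[of "min 1 (fst x0 / 2)"])
      show "fst z > min 1 (fst x0 / 2)" if "z \<in> K" for z using x0(2)[OF that] \<open>fst x0 > 0\<close> by linarith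
    qed (use \<open>fst x0 > 0\<close> in auto)
  qed
  define q where "q n = \<delta> / real (Suc n)" for n
  have qpos: "q n > 0" for n unfolding q_def using \<delta> by simp
  have qle: "q n \<le> \<delta>" for n unfolding q_def using \<delta> by (simp add: divide_le_eq)
  have q1: "q n \<le> 1" for n using qle[of n] \<delta> by linarith
  have qlim: "q \<longlonglongrightarrow> 0"
    unfolding q_def using LIMSEQ_Suc[OF lim_const_over_n[of \<delta>]] by simp
  have pos: "z \<in> K \<Longrightarrow> fst z > q n" for z n using \<delta>(3)[of z] qle[of n] by linarith
  have c\<phi>: "continuous_on UNIV \<phi>" using smooth2_cont \<phi> by blast
  have pm: "\<phi> \<in> borel_measurable borel" using c\<phi> by (rule borel_measurable_continuous_onI)
  obtain C where C: "C \<ge> 0" "\<And>z. \<bar>\<phi> z\<bar> \<le> C" using cs_bounded[OF c\<phi> K(1) K(3)] by blast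
  have ct: "continuous_on UNIV \<phi>t" "continuous_on UNIV \<phi>x"
    using smooth2_partials[OF \<phi> p] smooth2_cont by auto
  have ptm: "\<phi>t \<in> borel_measurable borel" "\<phi>x \<in> borel_measurable borel"
    using ct by (auto intro: borel_measurable_continuous_onI)
  have Kc: "closed K" using K(1) compact_imp_closed by blast
  have zt: "\<phi>t y = 0" "\<phi>x y = 0" if "y \<notin> K" for y using partials_zero[OF p Kc K(3) that] by auto
  obtain Ct where Ct: "Ct \<ge> 0" "\<And>y. \<bar>\<phi>t y\<bar> \<le> Ct" using cs_bounded[OF ct(1) K(1) zt(1)] by blast
  obtain Cx where Cx: "Cx \<ge> 0" "\<And>y. \<bar>\<phi>x y\<bar> \<le> Cx" using cs_bounded[OF ct(2) K(1) zt(2)] by blast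
  have Bk: "\<bar>w y - k\<bar> \<le> B + \<bar>k\<bar>" for y using wb[of y] by linarith
  define Q where "Q z = \<phi> z * sgn (w z - k)" for z
  have Qm: "Q \<in> borel_measurable borel" unfolding Q_def[abs_def] using pm wm by measurable
  have sgn1: "\<bar>sgn (x::real)\<bar> \<le> 1" for x by (simp add: abs_sgn_eq)
  have Qb: "\<bar>Q z\<bar> \<le> C" for z
    unfolding Q_def abs_mult using C(2)[of z] sgn1[of "w z - k"] C(1)
    by (metis abs_ge_zero mult.right_neutral mult_mono)
  have Qz: "Q z = 0" if "z \<notin> K" for z unfolding Q_def using K(3)[OF that] by simp
  define An where "An n = (\<integral>z. \<bar>w z - k\<bar> * (\<phi> (z + q n *\<^sub>R (1,lam)) - \<phi> z) / q n \<partial>lborel)" for n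
  define Rn where "Rn n = (\<integral>z. Q z * J (q n) z / q n \<partial>lborel)" for n
  have ineq: "- Rn n \<le> An n" for n
  proof -
    have "(\<integral>z. \<bar>w z - k\<bar> * (\<phi> (z + q n *\<^sub>R (1,lam)) - \<phi> z) \<partial>lborel)
       \<ge> - (\<integral>z. \<phi> z * sgn (w z - k) * J (q n) z \<partial>lborel)"
      by (rule conv_ineq[OF \<phi> K(1) K(3) pos qpos nn])
    then have "(\<integral>z. \<bar>w z - k\<bar> * (\<phi> (z + q n *\<^sub>R (1,lam)) - \<phi> z) \<partial>lborel) / q n
       \<ge> - (\<integral>z. \<phi> z * sgn (w z - k) * J (q n) z \<partial>lborel) / q n"
      unfolding minus_divide_left by (rule divide_right_mono[OF _ less_imp_le[OF qpos[of n]]])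
    then show ?thesis unfolding An_def Rn_def Q_def by simp
  qed
  have LA: "An \<longlonglongrightarrow> (\<integral>z. \<bar>w z - k\<bar> * (\<phi>t z + lam * \<phi>x z) \<partial>lborel)"
    unfolding An_def by (rule lhs_lim[OF \<phi> p K(1) K(3) qpos q1 qlim])
  have LR: "Rn \<longlonglongrightarrow> (\<integral>z. Q z * S z \<partial>lborel)"
    unfolding Rn_def by (rule rhs_lim[OF Qm Qb K(1) Qz qpos qlim])
  have le: "- (\<integral>z. Q z * S z \<partial>lborel) \<le> (\<integral>z. \<bar>w z - k\<bar> * (\<phi>t z + lam * \<phi>x z) \<partial>lborel)"
    by (rule LIMSEQ_le[OF tendsto_minus[OF LR] LA]) (use ineq in auto)
  have i1: "integrable lborel (\<lambda>z. \<bar>w z - k\<bar> * (\<phi>t z + lam * \<phi>x z))"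
  proof (rule bcs_integrable[OF _ K(1), of _ "(B + \<bar>k\<bar>) * (Ct + \<bar>lam\<bar> * Cx)"])
    show "(\<lambda>z. \<bar>w z - k\<bar> * (\<phi>t z + lam * \<phi>x z)) \<in> borel_measurable borel" using wm ptm by measurable
    show "\<bar>w z - k\<bar> * (\<phi>t z + lam * \<phi>x z) = 0" if "z \<notin> K" for z using zt[OF that] by simp
    show "\<bar>\<bar>w z - k\<bar> * (\<phi>t z + lam * \<phi>x z)\<bar> \<le> (B + \<bar>k\<bar>) * (Ct + \<bar>lam\<bar> * Cx)" for z
    proof -
      have "\<bar>\<phi>t z + lam * \<phi>x z\<bar> \<le> Ct + \<bar>lam\<bar> * Cx"
        using Ct(2)[of z] Cx(2)[of z] abs_triangle_ineq[of "\<phi>t z" "lam * \<phi>x z"]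
          mult_left_mono[OF Cx(2)[of z], of "\<bar>lam\<bar>"] by (simp add: abs_mult)
      then show ?thesis unfolding abs_mult using Bk[of z] by (intro mult_mono) auto
    qed
  qed
  have i2: "integrable lborel (\<lambda>z. Q z * S z)"
    by (rule bcs_integrable[OF _ K(1), of _ "C * B"])
      (use Qm Sm Qz Qb Sb C(1) B0 in \<open>auto simp: abs_mult intro: mult_mono\<close>)
  have "(\<integral>z. \<bar>w z - k\<bar> * (\<phi>t z + lam * \<phi>x z) + sgn (w z - k) * S z * \<phi> z \<partial>lborel)
      = (\<integral>z. \<bar>w z - k\<bar> * (\<phi>t z + lam * \<phi>x z) + Q z * S z \<partial>lborel)"
    unfolding Q_def by (simp add: algebra_simps)
  also have "\<dots> = (\<integral>z. \<bar>w z - k\<bar> * (\<phi>t z + lam * \<phi>x z) \<partial>lborel) + (\<integral>z. Q z * S z \<partial>lborel)"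
    using i1 i2 by simp
  finally show ?thesis using le by simp
qed

end


lemma G_split:
  assumes "c \<noteq> 0"
  shows "G c a b - G c k hk = (a - k) * (- (2 * b - a - k) / (8 * c^2) - 1/2) + (b - hk) * ((b + hk - 2 * k) / (8 * c^2) - 1/2)"
  using assms unfolding G_def by (simp add: field_simps power2_eq_square)

lemma G_h_zero:
  assumes "c > 0" "c^2 + 2 * k \<ge> 0"
  shows "G c k (h c k) = 0"
proof -
  have s: "(sqrt (c^2 + 2*k))^2 = c^2 + 2*k" using assms(2) by simp
  show ?thesis unfolding G_def h_def using assms(1) s
    by (simp add: field_simps power2_eq_square)
qed

lemma sgn_prod_le:
  fixes X Y \<alpha> \<beta> :: real
  assumes "\<alpha> < 0" "\<beta> < 0"
  shows "(sgn X + sgn Y) * (X * \<alpha> + Y * \<beta>) \<le> 0"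
proof -
  consider "X > 0" | "X = 0" | "X < 0" by linarith
  then show ?thesis
  proof cases
    case 1
    then have a: "X * \<alpha> < 0" using assms by (simp add: mult_pos_neg)
    consider "Y > 0" | "Y = 0" | "Y < 0" by linarith
    then show ?thesis
    proof cases
      case 1 then have "Y * \<beta> < 0" using assms by (simp add: mult_pos_neg)
      then show ?thesis using a \<open>X > 0\<close> \<open>Y > 0\<close> by simp
    next
      case 2 then show ?thesis using a \<open>X > 0\<close> by simp
    next
      case 3 then show ?thesis using \<open>X > 0\<close> by simp
    qed
  next
    case 2
    consider "Y > 0" | "Y = 0" | "Y < 0" by linarith
    then show ?thesis
    proof cases
      case 1 then have "Y * \<beta> < 0" using assms by (simp add: mult_pos_neg)
      then show ?thesis using \<open>X = 0\<close> \<open>Y > 0\<close> by simp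
    next
      case 2 then show ?thesis using \<open>X = 0\<close> by simp
    next
      case 3 then have "Y * \<beta> > 0" using assms by (simp add: mult_neg_neg)
      then show ?thesis using \<open>X = 0\<close> \<open>Y < 0\<close> by simp
    qed
  next
    case 3
    then have a: "X * \<alpha> > 0" using assms by (simp add: mult_neg_neg)
    consider "Y > 0" | "Y = 0" | "Y < 0" by linarith
    then show ?thesis
    proof cases
      case 1 then show ?thesis using \<open>X < 0\<close> by simp
    next
      case 2 then show ?thesis using a \<open>X < 0\<close> by simp
    next
      case 3 then have "Y * \<beta> > 0" using assms by (simp add: mult_neg_neg)
      then show ?thesis using a \<open>X < 0\<close> \<open>Y < 0\<close> by simp
    qed
  qed
qed

lemma sign_lemma:
  fixes U c m M a b k :: real
  assumes U: "0 \<le> U" "U < c" and m: "m = U * (U/2 - c)" and M: "M = U * (U/2 + c)"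
    and a: "a \<in> {m..M}" and b: "b \<in> {m..M}" and k: "k \<in> {m..M}"
  shows "(sgn (a - k) + sgn (b - h c k)) * G c a b \<le> 0"
proof -
  have c0: "c > 0" using U by linarith
  define sq where "sq = sqrt (c^2 + 2*k)"
  have lo: "(c - U)^2 \<le> c^2 + 2*k" using k m by (simp add: power2_eq_square algebra_simps)
  have hi: "c^2 + 2*k \<le> (c + U)^2" using k M by (simp add: power2_eq_square algebra_simps)
  have nn: "c^2 + 2*k \<ge> 0" using lo by (meson order_trans zero_le_power2)
  have s1: "c - U \<le> sq" unfolding sq_def by (rule real_le_rsqrt[OF lo])
  have s2: "sq \<le> c + U"
  proof -
    have "sq \<le> sqrt ((c + U)^2)" unfolding sq_def by (rule real_sqrt_le_mono[OF hi])
    also have "\<dots> = c + U" using U by simp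
    finally show ?thesis .
  qed
  have hk: "h c k - k = 2*c^2 - 2 * c * sq" unfolding h_def sq_def by simp
  have f1: "c * (c - U) \<le> c * sq" using s1 c0 by (intro mult_left_mono) auto
  have f2: "c * sq \<le> c * (c + U)" using s2 c0 by (intro mult_left_mono) auto
  have f3: "c * (c - U) = c^2 - c * U" "c * (c + U) = c^2 + c * U" by (simp_all add: power2_eq_square algebra_simps)
  have hk2: "h c k - k = 2 * c^2 - 2 * (c * sq)" using hk by simp
  have f4: "2 * c * U = 2 * (c * U)" by simp
  have d1: "h c k - k \<le> 2*c*U" unfolding hk2 f4 using f1 f3(1) by linarith
  have d2: "h c k - k \<ge> - 2*c*U" unfolding hk2 f4 using f2 f3(2) by linarith
  have cU: "c * U < c^2" using U c0 by (simp add: power2_eq_square)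
  have Mm: "M - m = 2 * c * U" using m M by (simp add: algebra_simps)
  have "G c a b = G c a b - G c k (h c k)" using G_h_zero[OF c0 nn] by simp
  also have "\<dots> = (a - k) * (- (2 * b - a - k) / (8 * c^2) - 1/2) + (b - h c k) * ((b + h c k - 2 * k) / (8 * c^2) - 1/2)"
    by (rule G_split) (use c0 in simp)
  finally have Ge: "G c a b = \<dots>" .
  have c2: "8 * c^2 > 0" using c0 by simp
  have al: "- (2 * b - a - k) / (8 * c^2) - 1/2 < 0"
  proof -
    have "- (2 * b - a - k) < 4 * c^2" using a b k Mm cU by auto
    then have "- (2 * b - a - k) / (8 * c^2) < 1/2" using c2 by (simp add: divide_less_eq)
    then show ?thesis by simp
  qed
  have be: "(b + h c k - 2 * k) / (8 * c^2) - 1/2 < 0"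
  proof -
    have "b + h c k - 2 * k < 4 * c^2" using b k Mm cU d1 by auto
    then have "(b + h c k - 2 * k) / (8 * c^2) < 1/2" using c2 by (simp add: divide_less_eq)
    then show ?thesis by simp
  qed
  show ?thesis unfolding Ge by (rule sgn_prod_le[OF al be])
qed


lemma RS_from_weak:
  fixes w S :: "real \<times> real \<Rightarrow> real"
  assumes wm: "w \<in> borel_measurable lborel" and Sm: "S \<in> borel_measurable lborel"
    and bw: "\<And>z. fst z > 0 \<Longrightarrow> \<bar>w z\<bar> \<le> B" and bS: "\<And>z. fst z > 0 \<Longrightarrow> \<bar>S z\<bar> \<le> B" and B0: "B \<ge> 0"
    and we: "weak_eq lam w S w0"
  shows "RS (\<lambda>z. if fst z > 0 then w z else 0) (\<lambda>z. if fst z > 0 then S z else 0) lam B"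
proof
  have fm: "(\<lambda>z::real \<times> real. fst z) \<in> borel_measurable borel" by (intro borel_measurable_continuous_onI continuous_intros)
  show "(\<lambda>z. if fst z > 0 then w z else 0) \<in> borel_measurable borel"
    using wm fm by measurable
  show "(\<lambda>z. if fst z > 0 then S z else 0) \<in> borel_measurable borel"
    using Sm fm by measurable
  show "\<bar>if fst z > 0 then w z else 0\<bar> \<le> B" for z using bw[of z] B0 by auto
  show "\<bar>if fst z > 0 then S z else 0\<bar> \<le> B" for z using bS[of z] B0 by auto
  fix \<psi> \<psi>t \<psi>x
  assume \<psi>: "smooth2 \<psi>" and cs: "compact_support_in \<psi> ({0<..} \<times> UNIV)" and p: "partials \<psi> \<psi>t \<psi>x"
  obtain K where K: "compact K" "K \<subseteq> {0<..} \<times> UNIV" "\<And>z. z \<notin> K \<Longrightarrow> \<psi> z = 0"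
    using cs unfolding compact_support_in_def by blast
  have cs': "compact_support_in \<psi> UNIV" unfolding compact_support_in_def using K by blast
  have Kc: "closed K" using K(1) compact_imp_closed by blast
  have zt: "\<psi>t y = 0" "\<psi>x y = 0" if "y \<notin> K" for y using partials_zero[OF p Kc K(3) that] by auto
  have W: "(LINT z:{0..} \<times> UNIV|lborel. w z * \<psi>t z + lam * w z * \<psi>x z + S z * \<psi> z)
       + (LINT x|lborel. w0 x * \<psi> (0, x)) = 0"
    using we \<psi> cs' p unfolding weak_eq_def by blast
  have "\<psi> (0, x) = 0" for x
  proof -
    have "(0, x) \<notin> K" using K(2) by auto
    then show ?thesis by (rule K(3))
  qed
  then have W2: "(LINT x|lborel. w0 x * \<psi> (0, x)) = 0" by simp
  have "(LINT z:{0..} \<times> UNIV|lborel. w z * \<psi>t z + lam * w z * \<psi>x z + S z * \<psi> z)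
     = (\<integral>z. (if fst z > 0 then w z else 0) * \<psi>t z + lam * (if fst z > 0 then w z else 0) * \<psi>x z
          + (if fst z > 0 then S z else 0) * \<psi> z \<partial>lborel)"
    unfolding set_lebesgue_integral_def
  proof (rule Bochner_Integration.integral_cong[OF refl])
    fix z :: "real \<times> real"
    show "indicator ({0..} \<times> UNIV) z *\<^sub>R (w z * \<psi>t z + lam * w z * \<psi>x z + S z * \<psi> z)
      = (if fst z > 0 then w z else 0) * \<psi>t z + lam * (if fst z > 0 then w z else 0) * \<psi>x z
          + (if fst z > 0 then S z else 0) * \<psi> z"
    proof (cases "z \<in> K")
      case True
      then have "fst z > 0" using K(2) by auto
      then show ?thesis by (cases z) (auto simp: indicator_def)
    next
      case False then show ?thesis using zt[OF False] K(3)[OF False] by simp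
    qed
  qed
  then show "(\<integral>z. (if fst z > 0 then w z else 0) * \<psi>t z + lam * (if fst z > 0 then w z else 0) * \<psi>x z
          + (if fst z > 0 then S z else 0) * \<psi> z \<partial>lborel) = 0"
    using W W2 by simp
qed

lemma G_bound:
  assumes c: "c > 0" and a: "\<bar>a\<bar> \<le> Bw" and b: "\<bar>b\<bar> \<le> Bw"
  shows "\<bar>G c a b\<bar> \<le> Bw^2 / c^2 + Bw"
proof -
  have "\<bar>b - a\<bar> \<le> 2 * Bw" using a b by linarith
  then have "\<bar>b - a\<bar>^2 \<le> (2 * Bw)^2" by (intro power_mono) auto
  then have sq: "(b - a)^2 \<le> 4 * Bw^2" by (simp add: power_mult_distrib)
  have "((b - a) / (2*c))^2 = (b - a)^2 / (4 * c^2)" by (simp add: power_divide power_mult_distrib)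
  also have "\<dots> \<le> 4 * Bw^2 / (4 * c^2)" using sq c by (intro divide_right_mono) auto
  also have "\<dots> = Bw^2 / c^2" by simp
  finally have t1: "((b - a) / (2*c))^2 \<le> Bw^2 / c^2" .
  have "\<bar>a + b\<bar> \<le> \<bar>a\<bar> + \<bar>b\<bar>" by (rule abs_triangle_ineq)
  then have t2: "\<bar>(a + b) / 2\<bar> \<le> Bw" using a b by simp
  have "\<bar>G c a b\<bar> \<le> \<bar>(1/2) * ((b - a) / (2*c))^2\<bar> + \<bar>(a + b) / 2\<bar>"
    unfolding G_def by (rule abs_triangle_ineq4)
  also have "\<dots> \<le> Bw^2 / c^2 + Bw"
  proof -
    have "\<bar>(1/2) * ((b - a) / (2*c))^2\<bar> = (1/2) * ((b - a) / (2*c))^2" by simp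
    also have "\<dots> \<le> ((b - a) / (2*c))^2" by simp
    finally show ?thesis using t1 t2 by linarith
  qed
  finally show ?thesis .
qed


context RS begin

lemma int_parts:
  assumes \<phi>: "smooth2 \<phi>" and cs: "compact_support_in \<phi> ({0<..} \<times> UNIV)" and p: "partials \<phi> \<phi>t \<phi>x"
  shows "integrable lborel (\<lambda>z. \<bar>w z - k\<bar> * (\<phi>t z + lam * \<phi>x z))"
    and "integrable lborel (\<lambda>z. sgn (w z - k) * S z * \<phi> z)"
proof -
  obtain K where K: "compact K" "K \<subseteq> {0<..} \<times> UNIV" "\<And>z. z \<notin> K \<Longrightarrow> \<phi> z = 0"
    using cs unfolding compact_support_in_def by blast
  have c\<phi>: "continuous_on UNIV \<phi>" using smooth2_cont \<phi> by blast
  have pm: "\<phi> \<in> borel_measurable borel" using c\<phi> by (rule borel_measurable_continuous_onI)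
  obtain C where C: "C \<ge> 0" "\<And>z. \<bar>\<phi> z\<bar> \<le> C" using cs_bounded[OF c\<phi> K(1) K(3)] by blast
  have ct: "continuous_on UNIV \<phi>t" "continuous_on UNIV \<phi>x"
    using smooth2_partials[OF \<phi> p] smooth2_cont by auto
  have ptm: "\<phi>t \<in> borel_measurable borel" "\<phi>x \<in> borel_measurable borel"
    using ct by (auto intro: borel_measurable_continuous_onI)
  have Kc: "closed K" using K(1) compact_imp_closed by blast
  have zt: "\<phi>t y = 0" "\<phi>x y = 0" if "y \<notin> K" for y using partials_zero[OF p Kc K(3) that] by auto
  obtain Ct where Ct: "Ct \<ge> 0" "\<And>y. \<bar>\<phi>t y\<bar> \<le> Ct" using cs_bounded[OF ct(1) K(1) zt(1)] by blast
  obtain Cx where Cx: "Cx \<ge> 0" "\<And>y. \<bar>\<phi>x y\<bar> \<le> Cx" using cs_bounded[OF ct(2) K(1) zt(2)] by blast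
  have Bk: "\<bar>w y - k\<bar> \<le> B + \<bar>k\<bar>" for y using wb[of y] by linarith
  show "integrable lborel (\<lambda>z. \<bar>w z - k\<bar> * (\<phi>t z + lam * \<phi>x z))"
  proof (rule bcs_integrable[OF _ K(1), of _ "(B + \<bar>k\<bar>) * (Ct + \<bar>lam\<bar> * Cx)"])
    show "(\<lambda>z. \<bar>w z - k\<bar> * (\<phi>t z + lam * \<phi>x z)) \<in> borel_measurable borel" using wm ptm by measurable
    show "\<bar>w z - k\<bar> * (\<phi>t z + lam * \<phi>x z) = 0" if "z \<notin> K" for z using zt[OF that] by simp
    show "\<bar>\<bar>w z - k\<bar> * (\<phi>t z + lam * \<phi>x z)\<bar> \<le> (B + \<bar>k\<bar>) * (Ct + \<bar>lam\<bar> * Cx)" for z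
    proof -
      have "\<bar>\<phi>t z + lam * \<phi>x z\<bar> \<le> Ct + \<bar>lam\<bar> * Cx"
        using Ct(2)[of z] Cx(2)[of z] abs_triangle_ineq[of "\<phi>t z" "lam * \<phi>x z"]
          mult_left_mono[OF Cx(2)[of z], of "\<bar>lam\<bar>"] by (simp add: abs_mult)
      then show ?thesis unfolding abs_mult using Bk[of z] by (intro mult_mono) auto
    qed
  qed
  have sgn1: "\<bar>sgn (x::real)\<bar> \<le> 1" for x by (simp add: abs_sgn_eq)
  show "integrable lborel (\<lambda>z. sgn (w z - k) * S z * \<phi> z)"
  proof (rule bcs_integrable[OF _ K(1), of _ "B * C"])
    show "(\<lambda>z. sgn (w z - k) * S z * \<phi> z) \<in> borel_measurable borel" using wm Sm pm by measurable
    show "sgn (w z - k) * S z * \<phi> z = 0" if "z \<notin> K" for z using K(3)[OF that] by simp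
    show "\<bar>sgn (w z - k) * S z * \<phi> z\<bar> \<le> B * C" for z
    proof -
      have "\<bar>sgn (w z - k) * S z\<bar> \<le> B"
        unfolding abs_mult using sgn1[of "w z - k"] Sb[of z] B0
        by (metis abs_ge_zero mult_left_le_one_le order_trans)
      then show ?thesis unfolding abs_mult[of _ "\<phi> z"] using C by (intro mult_mono) auto
    qed
  qed
qed

end

theorem mainTheorem3:
  fixes u0 :: "real \<Rightarrow> real" and c \<epsilon> U m M :: real
    and a b :: "real \<times> real \<Rightarrow> real"
  assumes u0_meas: "u0 \<in> borel_measurable lborel"
    and U_def: "ereal U = esssup lborel (\<lambda>x. ereal \<bar>u0 x\<bar>)"
    and u0_BV: "BV u0"
    and c_gt: "c > U"
    and eps_pos: "\<epsilon> > 0"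
    and m_def: "m = U * (U/2 - c)"
    and M_def: "M = U * (U/2 + c)"
    and sol: "diag_solution c \<epsilon> (\<lambda>x. (u0 x)^2/2 - c * u0 x) (\<lambda>x. (u0 x)^2/2 + c * u0 x) a b"
    and range_a: "\<forall>t x. t > 0 \<longrightarrow> a (t, x) \<in> {m..M}"
    and range_b: "\<forall>t x. t > 0 \<longrightarrow> b (t, x) \<in> {m..M}"
  shows "\<forall>k \<in> {m..M}. \<forall>\<phi> \<phi>t \<phi>x.
           smooth2 \<phi> \<and> compact_support_in \<phi> ({0<..} \<times> UNIV) \<and> partials \<phi> \<phi>t \<phi>x
           \<and> (\<forall>z. \<phi> z \<ge> 0) \<longrightarrow>
           (LINT z:{0<..} \<times> UNIV|lborel.
              (\<bar>a z - k\<bar> + \<bar>b z - h c k\<bar>) * \<phi>t z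
              - c * (\<bar>a z - k\<bar> - \<bar>b z - h c k\<bar>) * \<phi>x z) \<ge> 0"
proof (intro ballI allI impI)
  fix k \<phi> \<phi>t \<phi>x
  assume k: "k \<in> {m..M}"
    and H: "smooth2 \<phi> \<and> compact_support_in \<phi> ({0<..} \<times> UNIV) \<and> partials \<phi> \<phi>t \<phi>x \<and> (\<forall>z. \<phi> z \<ge> 0)"
  then have \<phi>: "smooth2 \<phi>" and cs: "compact_support_in \<phi> ({0<..} \<times> UNIV)" and p: "partials \<phi> \<phi>t \<phi>x"
    and nn: "\<And>z. \<phi> z \<ge> 0" by auto
  have "esssup lborel (\<lambda>x::real. 0::ereal) \<le> esssup lborel (\<lambda>x. ereal \<bar>u0 x\<bar>)"
    by (rule esssup_mono[of "\<lambda>x. 0"]) auto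
  moreover have "esssup lborel (\<lambda>x::real. 0::ereal) = 0"
    by (rule esssup_const) simp
  ultimately have "(0::ereal) \<le> ereal U" using U_def by simp
  then have U0: "U \<ge> 0" by simp
  have c0: "c > 0" using U0 c_gt by linarith
  have am: "a \<in> borel_measurable lborel" and bm: "b \<in> borel_measurable lborel"
    and wa: "weak_eq (-c) a (\<lambda>z. G c (a z) (b z) / \<epsilon>) (\<lambda>x. (u0 x)^2/2 - c * u0 x)"
    and wb: "weak_eq c b (\<lambda>z. G c (a z) (b z) / \<epsilon>) (\<lambda>x. (u0 x)^2/2 + c * u0 x)"
    using sol unfolding diag_solution_def by auto
  define Bw where "Bw = \<bar>m\<bar> + \<bar>M\<bar>"
  define B where "B = Bw + (Bw^2 / c^2 + Bw) / \<epsilon>"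
  have Bw0: "Bw \<ge> 0" unfolding Bw_def by simp
  have B0: "B \<ge> 0" unfolding B_def using Bw0 eps_pos by simp
  have ra: "a z \<in> {m..M}" if "fst z > 0" for z using range_a that by (cases z) auto
  have rb: "b z \<in> {m..M}" if "fst z > 0" for z using range_b that by (cases z) auto
  have ab_w: "\<bar>a z\<bar> \<le> B" "\<bar>b z\<bar> \<le> B" if "fst z > 0" for z
  proof -
    have "\<bar>a z\<bar> \<le> Bw" "\<bar>b z\<bar> \<le> Bw" using ra[OF that] rb[OF that] unfolding Bw_def by auto
    moreover have "Bw \<le> B" unfolding B_def using Bw0 eps_pos by simp
    ultimately show "\<bar>a z\<bar> \<le> B" "\<bar>b z\<bar> \<le> B" by auto
  qed
  have S_b: "\<bar>G c (a z) (b z) / \<epsilon>\<bar> \<le> B" if "fst z > 0" for z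
  proof -
    have "\<bar>a z\<bar> \<le> Bw" "\<bar>b z\<bar> \<le> Bw" using ra[OF that] rb[OF that] unfolding Bw_def by auto
    then have "\<bar>G c (a z) (b z)\<bar> \<le> Bw^2 / c^2 + Bw" by (intro G_bound c0)
    then have "\<bar>G c (a z) (b z) / \<epsilon>\<bar> \<le> (Bw^2 / c^2 + Bw) / \<epsilon>"
      using eps_pos by (simp add: divide_right_mono)
    then show ?thesis unfolding B_def using Bw0 by linarith
  qed
  have Sm: "(\<lambda>z. G c (a z) (b z) / \<epsilon>) \<in> borel_measurable lborel"
    unfolding G_def using am bm by measurable
  define aa where "aa z = (if fst z > 0 then a z else 0)" for z :: "real \<times> real"
  define bb where "bb z = (if fst z > 0 then b z else 0)" for z :: "real \<times> real"
  define SS where "SS z = (if fst z > 0 then G c (a z) (b z) / \<epsilon> else 0)" for z :: "real \<times> real"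
  interpret Ra: RS aa SS "-c" B
    unfolding aa_def[abs_def] SS_def[abs_def]
    by (rule RS_from_weak[OF am Sm _ _ B0 wa]) (use ab_w S_b in auto)
  interpret Rb: RS bb SS c B
    unfolding bb_def[abs_def] SS_def[abs_def]
    by (rule RS_from_weak[OF bm Sm _ _ B0 wb]) (use ab_w S_b in auto)
  have E1: "(\<integral>z. \<bar>aa z - k\<bar> * (\<phi>t z + (-c) * \<phi>x z) + sgn (aa z - k) * SS z * \<phi> z \<partial>lborel) \<ge> 0"
    by (rule Ra.renorm[OF \<phi> cs p nn])
  have E2: "(\<integral>z. \<bar>bb z - h c k\<bar> * (\<phi>t z + c * \<phi>x z) + sgn (bb z - h c k) * SS z * \<phi> z \<partial>lborel) \<ge> 0"
    by (rule Rb.renorm[OF \<phi> cs p nn])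
  obtain K where K: "compact K" "K \<subseteq> {0<..} \<times> UNIV" "\<And>z. z \<notin> K \<Longrightarrow> \<phi> z = 0"
    using cs unfolding compact_support_in_def by blast
  have Kc: "closed K" using K(1) compact_imp_closed by blast
  have zt: "\<phi>t y = 0" "\<phi>x y = 0" if "y \<notin> K" for y using partials_zero[OF p Kc K(3) that] by auto
  define X1 where "X1 z = \<bar>aa z - k\<bar> * (\<phi>t z + (-c) * \<phi>x z)" for z
  define Y1 where "Y1 z = sgn (aa z - k) * SS z * \<phi> z" for z
  define X2 where "X2 z = \<bar>bb z - h c k\<bar> * (\<phi>t z + c * \<phi>x z)" for z
  define Y2 where "Y2 z = sgn (bb z - h c k) * SS z * \<phi> z" for z
  have iX1: "integrable lborel X1" unfolding X1_def[abs_def] by (rule Ra.int_parts(1)[OF \<phi> cs p])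
  have iY1: "integrable lborel Y1" unfolding Y1_def[abs_def] by (rule Ra.int_parts(2)[OF \<phi> cs p])
  have iX2: "integrable lborel X2" unfolding X2_def[abs_def] by (rule Rb.int_parts(1)[OF \<phi> cs p])
  have iY2: "integrable lborel Y2" unfolding Y2_def[abs_def] by (rule Rb.int_parts(2)[OF \<phi> cs p])
  have e1: "integral\<^sup>L lborel X1 + integral\<^sup>L lborel Y1 \<ge> 0"
    using E1 iX1 iY1 unfolding X1_def[abs_def] Y1_def[abs_def] by simp
  have e2: "integral\<^sup>L lborel X2 + integral\<^sup>L lborel Y2 \<ge> 0"
    using E2 iX2 iY2 unfolding X2_def[abs_def] Y2_def[abs_def] by simp
  have Yneg: "Y1 z + Y2 z \<le> 0" for z
  proof (cases "fst z > 0")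
    case True
    have sl: "(sgn (a z - k) + sgn (b z - h c k)) * G c (a z) (b z) \<le> 0"
      by (rule sign_lemma[OF U0 c_gt m_def M_def ra[OF True] rb[OF True] k])
    then have "(sgn (a z - k) + sgn (b z - h c k)) * G c (a z) (b z) * (\<phi> z / \<epsilon>) \<le> 0"
      by (rule mult_nonpos_nonneg) (use nn[of z] eps_pos in simp)
    then show ?thesis using True unfolding Y1_def Y2_def aa_def bb_def SS_def by (simp add: algebra_simps)
  next
    case False then show ?thesis unfolding Y1_def Y2_def SS_def by simp
  qed
  have yneg: "integral\<^sup>L lborel Y1 + integral\<^sup>L lborel Y2 \<le> 0"
  proof -
    have "0 \<le> integral\<^sup>L lborel (\<lambda>z. - (Y1 z + Y2 z))"
    proof (rule Bochner_Integration.integral_nonneg)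
      fix x show "0 \<le> - (Y1 x + Y2 x)" using Yneg[of x] by linarith
    qed
    then show ?thesis using iY1 iY2 by simp
  qed
  have eqT: "(LINT z:{0<..} \<times> UNIV|lborel.
              (\<bar>a z - k\<bar> + \<bar>b z - h c k\<bar>) * \<phi>t z
              - c * (\<bar>a z - k\<bar> - \<bar>b z - h c k\<bar>) * \<phi>x z) = (\<integral>z. X1 z + X2 z \<partial>lborel)"
    unfolding set_lebesgue_integral_def
  proof (rule Bochner_Integration.integral_cong[OF refl])
    fix z :: "real \<times> real"
    show "indicator ({0<..} \<times> UNIV) z *\<^sub>R ((\<bar>a z - k\<bar> + \<bar>b z - h c k\<bar>) * \<phi>t z
              - c * (\<bar>a z - k\<bar> - \<bar>b z - h c k\<bar>) * \<phi>x z) = X1 z + X2 z"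
    proof (cases "z \<in> K")
      case True
      then have "fst z > 0" using K(2) by auto
      then show ?thesis unfolding X1_def X2_def aa_def bb_def
        by (cases z) (auto simp: indicator_def algebra_simps)
    next
      case False then show ?thesis using zt[OF False] unfolding X1_def X2_def by simp
    qed
  qed
  have "(\<integral>z. X1 z + X2 z \<partial>lborel) = integral\<^sup>L lborel X1 + integral\<^sup>L lborel X2"
    using iX1 iX2 by simp
  then show "(LINT z:{0<..} \<times> UNIV|lborel.
              (\<bar>a z - k\<bar> + \<bar>b z - h c k\<bar>) * \<phi>t z
              - c * (\<bar>a z - k\<bar> - \<bar>b z - h c k\<bar>) * \<phi>x z) \<ge> 0"
    using eqT e1 e2 yneg by linarith
qed


end
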